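(* Assume the setting described in the context and let $T\in(0,\infty)$ and $\Theta\in C([0,T],\mathbb R^{\mathfrak d})$ satisfy for all $t\in[0,T]$ that $\Theta_t=\Theta_0-\int_0^t\mathcal G(\Theta_s)\,ds$. Then for all $t\in[0,T]$ it holds that $$V(\Theta_t)=V(\Theta_0)-4L\int_0^t\int_{[a,b]^{\ell_0}}\big\langle\mathcal N^{L,\Theta_s}_\infty(x)-f(x),\mathcal N^{L,\Theta_s}_\infty(x)-f(0)\big\rangle\,\mu(dx)\,ds.$$
   Context: Setting. Let $L,\mathfrak d\in\mathbb N=\{1,2,\dots\}$, $(\ell_k)_{k\in\mathbb N_0}\subseteq\mathbb N$, $a\in\mathbb R$, $b\in(a,\infty)$, $\mathscr A\in(0,\infty)$, $\mathscr B\in(\mathscr A,\infty)$ with $\mathfrak d=\sum_{k=1}^L\ell_k(\ell_{k-1}+1)$; let $\mathbf d_k=\sum_{h=1}^k\ell_h(\ell_{h-1}+1)$ for $k\in\mathbb N_0$. For $\theta=(\theta_1,\dots,\theta_{\mathfrak d})\in\mathbb R^{\mathfrak d}$, $k\in\{1,\dots,L\}$, $i\in\{1,\dots,\ell_k\}$, $j\in\{1,\dots,\ell_{k-1}\}$ let $\mathfrak w^{k,\theta}_{i,j}=\theta_{(i-1)\ell_{k-1}+j+\mathbf d_{k-1}}$ and $\mathfrak b^{k,\theta}_i=\theta_{\ell_k\ell_{k-1}+i+\mathbf d_{k-1}}$, let $\mathfrak w^{k,\theta}=(\mathfrak w^{k,\theta}_{i,j})_{i,j}\in\mathbb R^{\ell_k\times\ell_{k-1}}$,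 $\mathfrak b^{k,\theta}=(\mathfrak b^{k,\theta}_1,\dots,\mathfrak b^{k,\theta}_{\ell_k})\in\mathbb R^{\ell_k}$, and $\mathcal A^\theta_k\colon\mathbb R^{\ell_{k-1}}\to\mathbb R^{\ell_k}$, $\mathcal A^\theta_k(x)=\mathfrak b^{k,\theta}+\mathfrak w^{k,\theta}x$. Let $\mathscr R_\infty(x)=\max\{x,0\}$ and let $\mathscr R_r\colon\mathbb R\to\mathbb R$, $r\in[1,\infty)$, satisfy for all $r\in[1,\infty)$: $\mathscr R_r\in C^1(\mathbb R,\mathbb R)$, $\mathscr R_r(x)=0$ for all $x\le\mathscr A r^{-1}$, $0\le\mathscr R_r(y)\le\max\{y,0\}$ for all $y\in\mathbb R$, $\mathscr R_r(z)=z$ for all $z\ge\mathscr B r^{-1}$; assume $\sup_{r\in[1,\infty)}\sup_{x\in\mathbb R}|(\mathscr R_r)'(x)|<\infty$. $\|\cdot\|$, $\langle\cdot,\cdot\rangle$ are the Euclidean norm and scalar product on each $\mathbb R^n$; for $r\in[1,\infty]$, $\mathfrak M_r(x_1,\dots,x_n)=(\mathscr R_r(x_1),\dots,\mathscr R_r(x_n))$. For $r\in[1,\infty]$, $\theta\in\mathbb R^{\mathfrak d}$ define $\mathcal N^{k,\theta}_r\colon\mathbb R^{\ell_0}\to\mathbb R^{\ell_k}$, $k\in\{1,\dots,L\}$, by $\mathcal N^{1,\theta}_r=\mathcal A^\theta_1$ and $\mathcal N^{k+1,\theta}_r(x)=\mathcal A^\theta_{k+1}(\mathfrak M_{r^{1/k}}(\mathcal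 N^{k,\theta}_r(x)))$ (with $\infty^{1/k}=\infty$). Let $\mu$ be a measure on the Borel $\sigma$-algebra of $[a,b]^{\ell_0}$ with $\mu([a,b]^{\ell_0})\in\mathbb R$, let $f=(f_1,\dots,f_{\ell_L})\colon\mathbb R^{\ell_0}\to\mathbb R^{\ell_L}$ be measurable (only its values on $[a,b]^{\ell_0}$ and the value $f(0)$ enter), and for $r\in[1,\infty]$ let $\mathcal L_r\colon\mathbb R^{\mathfrak d}\to\mathbb R$ be given by $\mathcal L_r(\theta)=\int_{[a,b]^{\ell_0}}\|\mathcal N^{L,\theta}_r(x)-f(x)\|^2\,\mu(dx)$ (these integrals are real numbers as part of the setting). Let $\mathcal G\colon\mathbb R^{\mathfrak d}\to\mathbb R^{\mathfrak d}$ satisfy $\mathcal G(\theta)=\lim_{r\to\infty}(\nabla\mathcal L_r)(\theta)$ for every $\theta$ for which $((\nabla\mathcal L_r)(\theta))_{r\in[1,\infty)}$ is convergent as $r\to\infty$. Let $V\colon\mathbb R^{\mathfrak d}\to\mathbb R$, $V(\theta)=\big[\sum_{k=1}^L\big(k\|\mathfrak b^{k,\theta}\|^2+\sum_{i=1}^{\ell_k}\sum_{j=1}^{\ell_{k-1}}|\mathfrak w^{k,\theta}_{i,j}|^2\big)\big]-2L\langle f(0),\mathfrak b^{L,\theta}\rangle$. *)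

theory Defs
  imports "HOL-Analysis.Analysis" "HOL-Probability.Probability"
begin

text \<open>Vectors in R^n are represented as functions nat => real; only the
coordinates 1..n are relevant. The layer widths are l :: nat => nat.\<close>

definition dsum :: "(nat \<Rightarrow> nat) \<Rightarrow> nat \<Rightarrow> nat" where
  "dsum l k = (\<Sum>h=1..k. l h * (l (h - 1) + 1))"

definition wgt :: "(nat \<Rightarrow> nat) \<Rightarrow> nat \<Rightarrow> (nat \<Rightarrow> real) \<Rightarrow> nat \<Rightarrow> nat \<Rightarrow> real" where
  "wgt l k \<theta> i j = \<theta> ((i - 1) * l (k - 1) + j + dsum l (k - 1))"

definition bias :: "(nat \<Rightarrow> nat) \<Rightarrow> nat \<Rightarrow> (nat \<Rightarrow> real) \<Rightarrow> nat \<Rightarrow> real" where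
  "bias l k \<theta> i = \<theta> (l k * l (k - 1) + i + dsum l (k - 1))"

definition affine :: "(nat \<Rightarrow> nat) \<Rightarrow> nat \<Rightarrow> (nat \<Rightarrow> real) \<Rightarrow> (nat \<Rightarrow> real) \<Rightarrow> nat \<Rightarrow> real" where
  "affine l k \<theta> x i = bias l k \<theta> i + (\<Sum>j=1..l (k - 1). wgt l k \<theta> i j * x j)"

fun netw :: "(nat \<Rightarrow> nat) \<Rightarrow> (nat \<Rightarrow> real \<Rightarrow> real) \<Rightarrow> (nat \<Rightarrow> real) \<Rightarrow> nat \<Rightarrow> (nat \<Rightarrow> real) \<Rightarrow> nat \<Rightarrow> real" where
  "netw l \<sigma> \<theta> 0 x = x"
| "netw l \<sigma> \<theta> (Suc 0) x = affine l 1 \<theta> x"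
| "netw l \<sigma> \<theta> (Suc (Suc k)) x =
     affine l (Suc (Suc k)) \<theta> (\<lambda>j. \<sigma> (Suc k) (netw l \<sigma> \<theta> (Suc k) x j))"

definition relu :: "real \<Rightarrow> real" where
  "relu x = max x 0"

definition netR :: "(nat \<Rightarrow> nat) \<Rightarrow> (real \<Rightarrow> real \<Rightarrow> real) \<Rightarrow> real \<Rightarrow> (nat \<Rightarrow> real) \<Rightarrow> nat \<Rightarrow> (nat \<Rightarrow> real) \<Rightarrow> nat \<Rightarrow> real" where
  "netR l R r \<theta> k = netw l (\<lambda>m. R (r powr (1 / real m))) \<theta> k"

definition netInf :: "(nat \<Rightarrow> nat) \<Rightarrow> (nat \<Rightarrow> real) \<Rightarrow> nat \<Rightarrow> (nat \<Rightarrow> real) \<Rightarrow> nat \<Rightarrow> real" where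
  "netInf l \<theta> k = netw l (\<lambda>m. relu) \<theta> k"

definition sqerr :: "(nat \<Rightarrow> nat) \<Rightarrow> nat \<Rightarrow> ((nat \<Rightarrow> real) \<Rightarrow> nat \<Rightarrow> real) \<Rightarrow> ((nat \<Rightarrow> real) \<Rightarrow> nat \<Rightarrow> real) \<Rightarrow> (nat \<Rightarrow> real) \<Rightarrow> real" where
  "sqerr l L N f x = (\<Sum>i=1..l L. (N x i - f x i)\<^sup>2)"

definition lossR :: "(nat \<Rightarrow> nat) \<Rightarrow> nat \<Rightarrow> (real \<Rightarrow> real \<Rightarrow> real) \<Rightarrow> (nat \<Rightarrow> real) measure \<Rightarrow> ((nat \<Rightarrow> real) \<Rightarrow> nat \<Rightarrow> real) \<Rightarrow> real \<Rightarrow> (nat \<Rightarrow> real) \<Rightarrow> real" where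
  "lossR l L R \<mu> f r \<theta> = (\<integral>x. sqerr l L (netR l R r \<theta> L) f x \<partial>\<mu>)"

definition grad :: "((nat \<Rightarrow> real) \<Rightarrow> real) \<Rightarrow> (nat \<Rightarrow> real) \<Rightarrow> nat \<Rightarrow> real" where
  "grad F \<theta> i = deriv (\<lambda>t. F (\<theta>(i := \<theta> i + t))) 0"

text \<open>Lyapunov-type function V; f0 stands for f(0).\<close>
definition Vfun :: "(nat \<Rightarrow> nat) \<Rightarrow> nat \<Rightarrow> (nat \<Rightarrow> real) \<Rightarrow> (nat \<Rightarrow> real) \<Rightarrow> real" where
  "Vfun l L f0 \<theta> =
     (\<Sum>k=1..L. real k * (\<Sum>i=1..l k. (bias l k \<theta> i)\<^sup>2)
                + (\<Sum>i=1..l k. \<Sum>j=1..l (k - 1). (wgt l k \<theta> i j)\<^sup>2))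
     - 2 * real L * (\<Sum>i=1..l L. f0 i * bias l L \<theta> i)"

end

theory Submission
  imports Defs
begin

lemma halfsq_integral:
  fixes g :: "real \<Rightarrow> real" and t :: real
  assumes t: "0 \<le> t" and gi: "set_integrable lborel {0..t} g"
  defines "h \<equiv> \<lambda>s. LINT u:{0..s}|lborel. g u"
  shows "set_integrable lborel {0..t} (\<lambda>s. h s * g s) \<and>
         (LINT s:{0..t}|lborel. h s * g s) = (h t)\<^sup>2 / 2"
proof -
  define G where "G = (\<lambda>s. indicator {0..t} s * g s)"
  have Gi: "integrable lborel G" using gi unfolding G_def set_integrable_def by (simp add: mult.commute)
  have Gm[measurable]: "G \<in> borel_measurable borel"
    using borel_measurable_integrable[OF Gi] by simp
  define F where "F = (\<lambda>(s::real,u::real). indicator {p::real\<times>real. snd p \<le> fst p} (s,u) * G s * G u)"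
  have Fm[measurable]: "F \<in> borel_measurable (lborel \<Otimes>\<^sub>M lborel)"
    unfolding F_def by measurable
  have prodi: "integrable (lborel \<Otimes>\<^sub>M lborel) (\<lambda>(s,u). G s * G u)"
  proof (rule lborel_pair.Fubini_integrable)
    show "(\<lambda>(s,u). G s * G u) \<in> borel_measurable (lborel \<Otimes>\<^sub>M lborel)" by measurable
    have "(\<lambda>x. LBINT y. norm (case (x, y) of (s, u) \<Rightarrow> G s * G u)) = (\<lambda>x. \<bar>G x\<bar> * (LBINT y. \<bar>G y\<bar>))"
      by (auto simp: abs_mult)
    moreover have "integrable lborel (\<lambda>x. \<bar>G x\<bar> * (LBINT y. \<bar>G y\<bar>))"
      using Gi by (intro integrable_mult_left) auto
    ultimately show "integrable lborel (\<lambda>x. LBINT y. norm (case (x, y) of (s, u) \<Rightarrow> G s * G u))" by simp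
    show "AE x in lborel. integrable lborel (\<lambda>y. case (x, y) of (s, u) \<Rightarrow> G s * G u)"
      using Gi by (auto intro!: integrable_mult_right)
  qed
  have Fi: "integrable (lborel \<Otimes>\<^sub>M lborel) F"
    apply (rule Bochner_Integration.integrable_bound[OF prodi Fm])
    by (auto simp: F_def indicator_def abs_mult)
  have Fi': "integrable (lborel \<Otimes>\<^sub>M lborel) (\<lambda>(s,u). F (s,u))" using Fi by simp
  have hG: "(LBINT u. indicator {p::real\<times>real. snd p \<le> fst p} (s,u) * G u) = h s" if "0 \<le> s" "s \<le> t" for s
  proof -
    have "(LBINT u. indicator {p::real\<times>real. snd p \<le> fst p} (s,u) * G u) = (LBINT u. indicator {0..s} u * g u)"
      using that by (intro Bochner_Integration.integral_cong) (auto simp: G_def indicator_def)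
    thus ?thesis by (simp add: h_def set_lebesgue_integral_def)
  qed
  have hG2: "(LBINT s. indicator {p::real\<times>real. snd p \<le> fst p} (s,u) * G s) = h t - h u" if "0 \<le> u" "u \<le> t" for u
  proof -
    have gi2: "set_integrable lborel {0..u} g" using that by (intro set_integrable_subset[OF gi]) auto
    have gi3: "set_integrable lborel {u<..t} g" using that by (intro set_integrable_subset[OF gi]) auto
    have "(LBINT s. indicator {p::real\<times>real. snd p \<le> fst p} (s,u) * G s) = (LBINT s. indicator {u..t} s * g s)"
      using that by (intro Bochner_Integration.integral_cong) (auto simp: G_def indicator_def)
    also have "\<dots> = (LBINT s. indicator {u<..t} s * g s)"
      apply (intro integral_cong_AE)
      subgoal using set_integrable_subset[OF gi, of "{u..t}"] that
        unfolding set_integrable_def by (auto intro: borel_measurable_integrable)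
      subgoal using gi3 unfolding set_integrable_def by (auto intro: borel_measurable_integrable)
      subgoal using AE_lborel_singleton[of u] by eventually_elim (auto simp: indicator_def)
      done
    also have "\<dots> = h t - h u"
    proof -
      have "h t = (LBINT s. indicator {0..u} s * g s + indicator {u<..t} s * g s)"
        unfolding h_def set_lebesgue_integral_def using that
        by (intro Bochner_Integration.integral_cong) (auto simp: indicator_def)
      also have "\<dots> = h u + (LBINT s. indicator {u<..t} s * g s)"
        using gi2 gi3 unfolding set_integrable_def h_def set_lebesgue_integral_def
        by (subst Bochner_Integration.integral_add) auto
      finally show ?thesis by simp
    qed
    finally show ?thesis .
  qed
  have FA: "(LBINT u. F (s,u)) = G s * (LBINT u. indicator {p::real\<times>real. snd p \<le> fst p} (s,u) * G u)" for s
    unfolding F_def by (simp add: integral_mult_right_zero[symmetric] mult.commute mult.left_commute del: integral_mult_right_zero)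
  have FB: "(LBINT s. F (s,u)) = G u * (LBINT s. indicator {p::real\<times>real. snd p \<le> fst p} (s,u) * G s)" for u
    unfolding F_def by (simp add: integral_mult_right_zero[symmetric] mult.commute mult.left_commute del: integral_mult_right_zero)
  have IA: "(LBINT s. LBINT u. F (s,u)) = (LBINT s. indicator {0..t} s * (h s * g s))"
    apply (intro Bochner_Integration.integral_cong refl)
    subgoal for s
      using hG[of s] unfolding FA
      by (cases "0 \<le> s \<and> s \<le> t") (auto simp: G_def indicator_def)
    done
  have IB: "(LBINT u. LBINT s. F (s,u)) = (LBINT u. indicator {0..t} u * (g u * (h t - h u)))"
    apply (intro Bochner_Integration.integral_cong refl)
    subgoal for u
      using hG2[of u] unfolding FB
      by (cases "0 \<le> u \<and> u \<le> t") (auto simp: G_def indicator_def)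
    done
  have FUB: "(LBINT u. LBINT s. F (s,u)) = (LBINT s. LBINT u. F (s,u))"
    using lborel_pair.Fubini_integral[OF Fi'] by simp
  have intA: "integrable lborel (\<lambda>s. LBINT u. F (s,u))"
    using lborel_pair.integrable_fst[OF Fi'] by simp
  have intA': "integrable lborel (\<lambda>s. indicator {0..t} s * (h s * g s))"
    apply (rule Bochner_Integration.integrable_cong[THEN iffD1, OF refl _ intA])
    subgoal for s using hG[of s] unfolding FA
      by (cases "0 \<le> s \<and> s \<le> t") (auto simp: G_def indicator_def)
    done
  have "(LBINT u. indicator {0..t} u * (g u * (h t - h u))) =
        (LBINT u. h t * (indicator {0..t} u * g u) - indicator {0..t} u * (h u * g u))"
    by (intro Bochner_Integration.integral_cong) (auto simp: algebra_simps)
  also have "\<dots> = h t * h t - (LBINT s. indicator {0..t} s * (h s * g s))"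
    using gi intA' unfolding set_integrable_def
    by (subst Bochner_Integration.integral_diff) (auto simp: h_def set_lebesgue_integral_def)
  finally have "(LBINT s. indicator {0..t} s * (h s * g s)) = h t * h t - (LBINT s. indicator {0..t} s * (h s * g s))"
    using IA IB FUB by simp
  then have "(LBINT s. indicator {0..t} s * (h s * g s)) = (h t)\<^sup>2 / 2"
    by (simp add: power2_eq_square)
  then show ?thesis using intA'
    by (simp add: set_integrable_def set_lebesgue_integral_def)
qed

lemma deriv_integral_right:
  fixes \<phi> \<phi>' :: "real \<Rightarrow> 'a \<Rightarrow> real" and w :: "'a \<Rightarrow> real"
  assumes int: "\<And>t. integrable M (\<phi> t)"
    and der: "\<And>x t. x \<in> space M \<Longrightarrow> ((\<lambda>s. \<phi> s x) has_real_derivative \<phi>' t x) (at t)"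
    and m0: "\<phi>' 0 \<in> borel_measurable M"
    and wi: "integrable M w"
    and bd: "\<And>x t. x \<in> space M \<Longrightarrow> \<bar>t\<bar> \<le> 1 \<Longrightarrow> \<bar>\<phi>' t x\<bar> \<le> w x"
  shows "((\<lambda>h. ((\<integral>x. \<phi> h x \<partial>M) - (\<integral>x. \<phi> 0 x \<partial>M)) / h) \<longlongrightarrow> (\<integral>x. \<phi>' 0 x \<partial>M)) (at_right 0)"
proof -
  define s where "s = (\<lambda>u x. (\<phi> (inverse u) x - \<phi> 0 x) / inverse u)"
  have "((\<lambda>u. \<integral>x. s u x \<partial>M) \<longlongrightarrow> (\<integral>x. \<phi>' 0 x \<partial>M)) at_top"
  proof (rule integral_dominated_convergence_at_top[where w=w])
    show "\<phi>' 0 \<in> borel_measurable M" by fact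
    show "s t \<in> borel_measurable M" for t
      unfolding s_def using int by (intro borel_measurable_divide borel_measurable_diff) auto
    show "integrable M w" by fact
    show "AE x in M. ((\<lambda>i. s i x) \<longlongrightarrow> \<phi>' 0 x) at_top"
    proof (rule AE_I2)
      fix x assume x: "x \<in> space M"
      have "((\<lambda>h. (\<phi> h x - \<phi> 0 x) / (h - 0)) \<longlongrightarrow> \<phi>' 0 x) (at 0)"
        using der[OF x, of 0] unfolding has_field_derivative_iff by simp
      then have "((\<lambda>h. (\<phi> h x - \<phi> 0 x) / h) \<longlongrightarrow> \<phi>' 0 x) (at_right 0)"
        by (auto intro: tendsto_mono at_le)
      then show "((\<lambda>i. s i x) \<longlongrightarrow> \<phi>' 0 x) at_top"
        unfolding s_def filterlim_at_right_to_top by simp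
    qed
    show "\<forall>\<^sub>F i in at_top. AE x in M. norm (s i x) \<le> w x"
    proof (rule eventually_mono[OF eventually_ge_at_top[of 1]], rule AE_I2)
      fix u x assume u: "(1::real) \<le> u" and x: "x \<in> space M"
      have pos: "0 < inverse u" using u by simp
      obtain z where z: "0 < z" "z < inverse u" "\<phi> (inverse u) x - \<phi> 0 x = (inverse u - 0) * \<phi>' z x"
        using MVT2[OF pos, of "\<lambda>s. \<phi> s x" "\<lambda>t. \<phi>' t x"] der[OF x] by auto
      have "inverse u \<le> 1" using u by (simp add: inverse_le_1_iff)
      then have "\<bar>\<phi>' z x\<bar> \<le> w x" using z by (intro bd[OF x]) auto
      then show "norm (s u x) \<le> w x" using z pos unfolding s_def by simp
    qed
  qed
  moreover have "(\<integral>x. s u x \<partial>M) = ((\<integral>x. \<phi> (inverse u) x \<partial>M) - (\<integral>x. \<phi> 0 x \<partial>M)) / inverse u" for u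
    unfolding s_def using int by simp
  ultimately show ?thesis
    unfolding filterlim_at_right_to_top by simp
qed

lemma deriv_integral:
  fixes \<phi> \<phi>' :: "real \<Rightarrow> 'a \<Rightarrow> real" and w :: "'a \<Rightarrow> real"
  assumes int: "\<And>t. integrable M (\<phi> t)"
    and der: "\<And>x t. x \<in> space M \<Longrightarrow> ((\<lambda>s. \<phi> s x) has_real_derivative \<phi>' t x) (at t)"
    and m0: "\<phi>' 0 \<in> borel_measurable M"
    and wi: "integrable M w"
    and bd: "\<And>x t. x \<in> space M \<Longrightarrow> \<bar>t\<bar> \<le> 1 \<Longrightarrow> \<bar>\<phi>' t x\<bar> \<le> w x"
  shows "((\<lambda>t. \<integral>x. \<phi> t x \<partial>M) has_real_derivative (\<integral>x. \<phi>' 0 x \<partial>M)) (at 0)"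
proof -
  have R: "((\<lambda>h. ((\<integral>x. \<phi> h x \<partial>M) - (\<integral>x. \<phi> 0 x \<partial>M)) / h) \<longlongrightarrow> (\<integral>x. \<phi>' 0 x \<partial>M)) (at_right 0)"
    by (rule deriv_integral_right[OF int der m0 wi bd])
  have dneg: "((\<lambda>s. \<phi> (- s) x) has_real_derivative - \<phi>' (- t) x) (at t)" if "x \<in> space M" for x t
  proof -
    have d: "((\<lambda>s. \<phi> s x) has_real_derivative \<phi>' (- t) x) (at (- t))" using der[OF that] .
    have m: "((\<lambda>s. - s) has_real_derivative -1) (at t)"
      by (rule DERIV_minus[OF DERIV_ident])
    have "((\<lambda>s. \<phi> (- s) x) has_real_derivative \<phi>' (- t) x * (-1)) (at t)"
      by (rule DERIV_chain2[where f="\<lambda>s. \<phi> s x" and g="\<lambda>s. - s", OF d m])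
    then show ?thesis by (simp only: mult_minus1_right)
  qed
  have bdneg: "\<bar>- \<phi>' (- t) x\<bar> \<le> w x" if "x \<in> space M" "\<bar>t\<bar> \<le> 1" for x t
    using bd[OF that(1), of "-t"] that by simp
  have m0': "(\<lambda>x. - \<phi>' (- 0) x) \<in> borel_measurable M" using m0 by simp
  have L0: "((\<lambda>h. ((\<integral>x. \<phi> (-h) x \<partial>M) - (\<integral>x. \<phi> (-0) x \<partial>M)) / h) \<longlongrightarrow> (\<integral>x. - \<phi>' (-0) x \<partial>M)) (at_right 0)"
    using deriv_integral_right[where \<phi>="\<lambda>t. \<phi> (-t)" and M=M and \<phi>'="\<lambda>t x. - \<phi>' (-t) x" and w=w, OF int dneg m0' wi bdneg] .
  have L: "((\<lambda>h. ((\<integral>x. \<phi> h x \<partial>M) - (\<integral>x. \<phi> 0 x \<partial>M)) / h) \<longlongrightarrow> (\<integral>x. \<phi>' 0 x \<partial>M)) (at_left 0)"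
  proof -
    have e1: "(\<lambda>u. ((\<integral>x. \<phi> (- u) x \<partial>M) - (\<integral>x. \<phi> 0 x \<partial>M)) / (- u)) =
              (\<lambda>h. - (((\<integral>x. \<phi> (-h) x \<partial>M) - (\<integral>x. \<phi> (-0) x \<partial>M)) / h))"
      by (rule ext) (simp only: minus_zero divide_minus_right)
    have e2: "- (\<integral>x. - \<phi>' (-0) x \<partial>M) = (\<integral>x. \<phi>' 0 x \<partial>M)"
      by (simp only: minus_zero Bochner_Integration.integral_minus minus_minus)
    have "((\<lambda>u. ((\<integral>x. \<phi> (- u) x \<partial>M) - (\<integral>x. \<phi> 0 x \<partial>M)) / (- u)) \<longlongrightarrow> (\<integral>x. \<phi>' 0 x \<partial>M)) (at_right 0)"
      unfolding e1 e2[symmetric] by (rule tendsto_minus[OF L0])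
    then show ?thesis unfolding filterlim_at_left_to_right by (simp only: minus_zero)
  qed
  have "((\<lambda>h. ((\<integral>x. \<phi> h x \<partial>M) - (\<integral>x. \<phi> 0 x \<partial>M)) / (h - 0)) \<longlongrightarrow> (\<integral>x. \<phi>' 0 x \<partial>M)) (at 0)"
    using filterlim_split_at[OF L R] by simp
  then show ?thesis unfolding has_field_derivative_iff by simp
qed

fun dnet :: "(nat \<Rightarrow> nat) \<Rightarrow> (nat \<Rightarrow> real \<Rightarrow> real) \<Rightarrow> (nat \<Rightarrow> real \<Rightarrow> real) \<Rightarrow> (nat \<Rightarrow> real)
   \<Rightarrow> (nat \<Rightarrow> real) \<Rightarrow> nat \<Rightarrow> (nat \<Rightarrow> real) \<Rightarrow> nat \<Rightarrow> real" where
  "dnet l \<sigma> \<sigma>' \<theta> v 0 x = (\<lambda>i. 0)"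
| "dnet l \<sigma> \<sigma>' \<theta> v (Suc 0) x = affine l 1 v x"
| "dnet l \<sigma> \<sigma>' \<theta> v (Suc (Suc k)) x =
     (\<lambda>i. affine l (Suc (Suc k)) v (\<lambda>j. \<sigma> (Suc k) (netw l \<sigma> \<theta> (Suc k) x j)) i
        + (\<Sum>j=1..l (Suc k). wgt l (Suc (Suc k)) \<theta> i j *
             (\<sigma>' (Suc k) (netw l \<sigma> \<theta> (Suc k) x j) * dnet l \<sigma> \<sigma>' \<theta> v (Suc k) x j)))"

definition inp :: "(nat \<Rightarrow> nat) \<Rightarrow> (nat \<Rightarrow> real \<Rightarrow> real) \<Rightarrow> (nat \<Rightarrow> real) \<Rightarrow> nat \<Rightarrow> (nat \<Rightarrow> real) \<Rightarrow> nat \<Rightarrow> real" where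
  "inp l \<sigma> \<theta> k x = (if k = 0 then x else (\<lambda>j. \<sigma> k (netw l \<sigma> \<theta> k x j)))"

lemma netw_Suc: "netw l \<sigma> \<theta> (Suc k) x = affine l (Suc k) \<theta> (inp l \<sigma> \<theta> k x)"
  by (cases k) (auto simp: inp_def)

lemma dnet_Suc: "dnet l \<sigma> \<sigma>' \<theta> v (Suc k) x i = affine l (Suc k) v (inp l \<sigma> \<theta> k x) i +
   (if k = 0 then 0 else (\<Sum>j=1..l k. wgt l (Suc k) \<theta> i j * (\<sigma>' k (netw l \<sigma> \<theta> k x j) * dnet l \<sigma> \<sigma>' \<theta> v k x j)))"
  by (cases k) (auto simp: inp_def)

lemma bias_lin: "bias l k (\<lambda>q. \<theta> q + s * v q) i = bias l k \<theta> i + s * bias l k v i"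
  by (simp add: bias_def)
lemma wgt_lin: "wgt l k (\<lambda>q. \<theta> q + s * v q) i j = wgt l k \<theta> i j + s * wgt l k v i j"
  by (simp add: wgt_def)

lemma affine_deriv:
  assumes "\<And>j. j \<in> {1..l (k - 1)} \<Longrightarrow> ((\<lambda>s. y s j) has_real_derivative y' j) (at t)"
  shows "((\<lambda>s. affine l k (\<lambda>q. \<theta> q + s * v q) (y s) i) has_real_derivative
     affine l k v (y t) i + (\<Sum>j=1..l (k - 1). wgt l k (\<lambda>q. \<theta> q + t * v q) i j * y' j)) (at t)"
proof -
  have "((\<lambda>s. bias l k \<theta> i + s * bias l k v i + (\<Sum>j=1..l (k - 1). (wgt l k \<theta> i j + s * wgt l k v i j) * y s j))
      has_real_derivative bias l k v i + (\<Sum>j=1..l (k - 1). wgt l k v i j * y t j + y' j * (wgt l k \<theta> i j + t * wgt l k v i j))) (at t)"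
    by (auto intro!: derivative_eq_intros assms)
  then show ?thesis
    by (simp add: affine_def bias_lin wgt_lin sum.distrib algebra_simps)
qed

lemma netw_deriv:
  assumes sd: "\<And>m y. (\<sigma> m has_real_derivative \<sigma>' m y) (at y)"
  shows "((\<lambda>s. netw l \<sigma> (\<lambda>q. \<theta> q + s * v q) k x i) has_real_derivative
           dnet l \<sigma> \<sigma>' (\<lambda>q. \<theta> q + t * v q) v k x i) (at t)"
proof (induction k arbitrary: i)
  case 0
  then show ?case by simp
next
  case (Suc k)
  have inpd: "((\<lambda>s. inp l \<sigma> (\<lambda>q. \<theta> q + s * v q) k x j) has_real_derivative
      (if k = 0 then 0 else \<sigma>' k (netw l \<sigma> (\<lambda>q. \<theta> q + t * v q) k x j) * dnet l \<sigma> \<sigma>' (\<lambda>q. \<theta> q + t * v q) v k x j)) (at t)" for j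
  proof (cases "k = 0")
    case True then show ?thesis by (simp add: inp_def)
  next
    case False
    then show ?thesis unfolding inp_def
      using DERIV_chain2[OF sd Suc.IH[of j]] by simp
  qed
  show ?case
    unfolding netw_Suc dnet_Suc
    using affine_deriv[where k="Suc k" and y="\<lambda>s. inp l \<sigma> (\<lambda>q. \<theta> q + s * v q) k x", OF inpd]
    by (cases "k = 0") (simp_all add: mult.assoc)
qed

lemma affine_add: "affine l k (\<lambda>q. v q + w q) y i = affine l k v y i + affine l k w y i"
  by (simp add: affine_def bias_def wgt_def sum.distrib algebra_simps)
lemma affine_smult: "affine l k (\<lambda>q. c * v q) y i = c * affine l k v y i"
  by (simp add: affine_def bias_def wgt_def sum_distrib_left algebra_simps)
lemma affine_zero: "affine l k (\<lambda>q. 0) y i = 0"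
  by (simp add: affine_def bias_def wgt_def)

lemma dnet_add: "dnet l \<sigma> \<sigma>' \<theta> (\<lambda>q. v q + w q) k x i = dnet l \<sigma> \<sigma>' \<theta> v k x i + dnet l \<sigma> \<sigma>' \<theta> w k x i"
proof (induction k arbitrary: i)
  case 0 then show ?case by simp
next
  case (Suc k) then show ?case
    unfolding dnet_Suc affine_add by (simp add: sum.distrib algebra_simps)
qed

lemma dnet_smult: "dnet l \<sigma> \<sigma>' \<theta> (\<lambda>q. c * v q) k x i = c * dnet l \<sigma> \<sigma>' \<theta> v k x i"
proof (induction k arbitrary: i)
  case 0 then show ?case by simp
next
  case (Suc k) then show ?case
    unfolding dnet_Suc affine_smult by (simp add: sum_distrib_left algebra_simps)
qed

lemma dnet_zero: "dnet l \<sigma> \<sigma>' \<theta> (\<lambda>q. 0) k x i = 0"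
  using dnet_smult[of l \<sigma> \<sigma>' \<theta> 0 "\<lambda>q. 0" k x i] by simp

lemma dnet_sum:
  assumes "finite S"
  shows "dnet l \<sigma> \<sigma>' \<theta> (\<lambda>q. \<Sum>s\<in>S. F s q) k x i = (\<Sum>s\<in>S. dnet l \<sigma> \<sigma>' \<theta> (F s) k x i)"
  using assms
proof (induction S rule: finite_induct)
  case empty then show ?case using dnet_zero by simp
next
  case (insert a S) then show ?case using dnet_add[of l \<sigma> \<sigma>' \<theta> "F a" "\<lambda>q. \<Sum>s\<in>S. F s q"] by simp
qed

lemma dnet_diff: "dnet l \<sigma> \<sigma>' \<theta> (\<lambda>q. v q - w q) k x i = dnet l \<sigma> \<sigma>' \<theta> v k x i - dnet l \<sigma> \<sigma>' \<theta> w k x i"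
  using dnet_add[of l \<sigma> \<sigma>' \<theta> v "\<lambda>q. (-1) * w q" k x i] dnet_smult[of l \<sigma> \<sigma>' \<theta> "-1" w k x i] by simp

lemma netw_meas:
  assumes xm: "\<And>j. j \<in> {1..l 0} \<Longrightarrow> (\<lambda>x. x j) \<in> borel_measurable M"
    and sm: "\<And>m. \<sigma> m \<in> borel_measurable borel"
  shows "(\<lambda>x. netw l \<sigma> \<theta> (Suc k) x i) \<in> borel_measurable M"
proof (induction k arbitrary: i)
  case 0 then show ?case
    by (simp add: affine_def) (intro borel_measurable_add borel_measurable_const borel_measurable_sum
        borel_measurable_times xm; simp)
next
  case (Suc k) then show ?case
    by (simp add: affine_def) (intro borel_measurable_add borel_measurable_const borel_measurable_sum
        borel_measurable_times measurable_compose[OF Suc.IH sm])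
qed

lemma dnet_meas:
  assumes xm: "\<And>j. j \<in> {1..l 0} \<Longrightarrow> (\<lambda>x. x j) \<in> borel_measurable M"
    and sm: "\<And>m. \<sigma> m \<in> borel_measurable borel"
    and sm': "\<And>m. \<sigma>' m \<in> borel_measurable borel"
  shows "(\<lambda>x. dnet l \<sigma> \<sigma>' \<theta> v (Suc k) x i) \<in> borel_measurable M"
proof (induction k arbitrary: i)
  case 0 then show ?case
    by (simp add: affine_def) (intro borel_measurable_add borel_measurable_const borel_measurable_sum
        borel_measurable_times xm; simp)
next
  case (Suc k) then show ?case
    by (simp add: affine_def) (intro borel_measurable_add borel_measurable_const borel_measurable_sum
        borel_measurable_times measurable_compose[OF netw_meas[OF xm sm] sm] measurable_compose[OF netw_meas[OF xm sm] sm'] Suc.IH)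
qed

definition widx :: "(nat \<Rightarrow> nat) \<Rightarrow> nat \<Rightarrow> nat \<Rightarrow> nat \<Rightarrow> nat" where
  "widx l k i j = (i - 1) * l (k - 1) + j + dsum l (k - 1)"
definition bidx :: "(nat \<Rightarrow> nat) \<Rightarrow> nat \<Rightarrow> nat \<Rightarrow> nat" where
  "bidx l k i = l k * l (k - 1) + i + dsum l (k - 1)"

lemma wgt_idx: "wgt l k \<theta> i j = \<theta> (widx l k i j)" by (simp add: wgt_def widx_def)
lemma bias_idx: "bias l k \<theta> i = \<theta> (bidx l k i)" by (simp add: bias_def bidx_def)

lemma dsum_Suc: "dsum l (Suc k) = dsum l k + l (Suc k) * (l k + 1)"
  by (simp add: dsum_def)

lemma dsum_mono: "k \<le> k' \<Longrightarrow> dsum l k \<le> dsum l k'"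
  unfolding dsum_def by (rule sum_mono2) auto

lemma widx_range:
  assumes "1 \<le> k" "i \<in> {1..l k}" "j \<in> {1..l (k - 1)}"
  shows "dsum l (k - 1) < widx l k i j \<and> widx l k i j \<le> dsum l (k - 1) + l k * l (k - 1)"
proof -
  have a1: "(i - 1) * l (k - 1) \<le> (l k - 1) * l (k - 1)" using assms by (intro mult_right_mono) auto
  have a2: "(l k - 1) * l (k - 1) + l (k - 1) = l k * l (k - 1)" using assms
    by (cases "l k") auto
  have a3: "j \<le> l (k - 1)" "1 \<le> j" using assms by auto
  show ?thesis unfolding widx_def using a1 a2 a3 by linarith
qed

lemma bidx_range:
  assumes "1 \<le> k" "i \<in> {1..l k}"
  shows "dsum l (k - 1) + l k * l (k - 1) < bidx l k i \<and> bidx l k i \<le> dsum l k"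
proof -
  have "dsum l k = dsum l (k - 1) + l k * (l (k - 1) + 1)"
    using assms dsum_Suc[of l "k - 1"] by simp
  then show ?thesis using assms unfolding bidx_def by (auto simp: algebra_simps)
qed

lemma layer_unique:
  assumes "1 \<le> k" "1 \<le> k'" "dsum l (k - 1) < p" "p \<le> dsum l k" "dsum l (k' - 1) < p" "p \<le> dsum l k'"
  shows "k = k'"
proof (rule ccontr)
  assume "k \<noteq> k'"
  then consider "k < k'" | "k' < k" by linarith
  then show False
  proof cases
    case 1 then have "dsum l k \<le> dsum l (k' - 1)" by (intro dsum_mono) auto
    then show False using assms by linarith
  next
    case 2 then have "dsum l k' \<le> dsum l (k - 1)" by (intro dsum_mono) auto
    then show False using assms by linarith
  qed
qed

lemma dsum_le_L: "1 \<le> k \<Longrightarrow> k \<le> L \<Longrightarrow> dsum l k \<le> dsum l L" by (rule dsum_mono)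

lemma widx_in: "1 \<le> k \<Longrightarrow> k \<le> L \<Longrightarrow> i \<in> {1..l k} \<Longrightarrow> j \<in> {1..l (k - 1)} \<Longrightarrow> widx l k i j \<in> {1..dsum l L}"
  using widx_range[of k i l j] bidx_range[of k i l] dsum_mono[of k L l] by auto

lemma bidx_in: "1 \<le> k \<Longrightarrow> k \<le> L \<Longrightarrow> i \<in> {1..l k} \<Longrightarrow> bidx l k i \<in> {1..dsum l L}"
  using bidx_range[of k i l] dsum_mono[of k L l] by auto

lemma bidx_eq:
  assumes "1 \<le> k" "i \<in> {1..l k}" "1 \<le> k'" "i' \<in> {1..l k'}"
  shows "bidx l k i = bidx l k' i' \<longleftrightarrow> k = k' \<and> i = i'"
proof
  assume e: "bidx l k i = bidx l k' i'"
  have "k = k'"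
    apply (rule layer_unique[OF assms(1,3), of l "bidx l k i"])
    using bidx_range[where l=l, OF assms(1,2)] bidx_range[where l=l, OF assms(3,4)] e by auto
  then show "k = k' \<and> i = i'" using e by (simp add: bidx_def)
qed simp

lemma widx_bidx:
  assumes "1 \<le> k" "i \<in> {1..l k}" "j \<in> {1..l (k - 1)}" "1 \<le> k'" "i' \<in> {1..l k'}"
  shows "widx l k i j \<noteq> bidx l k' i'"
proof
  assume e: "widx l k i j = bidx l k' i'"
  have r1: "dsum l (k - 1) < widx l k i j \<and> widx l k i j \<le> dsum l (k - 1) + l k * l (k - 1)"
    by (rule widx_range[where l=l, OF assms(1-3)])
  have r2: "dsum l (k' - 1) + l k' * l (k' - 1) < bidx l k' i' \<and> bidx l k' i' \<le> dsum l k'"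
    by (rule bidx_range[where l=l, OF assms(4,5)])
  have "dsum l k = dsum l (k - 1) + l k * (l (k - 1) + 1)"
    using assms dsum_Suc[of l "k - 1"] by simp
  then have "k = k'"
    using r1 r2 e by (intro layer_unique[OF assms(1,4), of l "bidx l k' i'"]) (auto simp: algebra_simps)
  then show False using r1 r2 e by simp
qed

lemma bidx_widx:
  assumes "1 \<le> k" "i \<in> {1..l k}" "j \<in> {1..l (k - 1)}" "1 \<le> k'" "i' \<in> {1..l k'}"
  shows "bidx l k' i' \<noteq> widx l k i j"
  using widx_bidx[OF assms] by metis

lemma div_mod_pos_eq:
  fixes n i j i' j' :: nat
  assumes j: "j \<in> {1..n}" "j' \<in> {1..n}" and e: "i * n + j = i' * n + j'"
  shows "i = i' \<and> j = j'"
proof -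
  have "\<not> i < i'"
  proof
    assume "i < i'"
    then have "(i + 1) * n \<le> i' * n" by (intro mult_right_mono) auto
    then show False using j e by (simp add: algebra_simps)
  qed
  moreover have "\<not> i' < i"
  proof
    assume "i' < i"
    then have "(i' + 1) * n \<le> i * n" by (intro mult_right_mono) auto
    then show False using j e by (simp add: algebra_simps)
  qed
  ultimately have "i = i'" by linarith
  then show ?thesis using e by simp
qed

lemma widx_eq:
  assumes "1 \<le> k" "i \<in> {1..l k}" "j \<in> {1..l (k - 1)}" "1 \<le> k'" "i' \<in> {1..l k'}" "j' \<in> {1..l (k' - 1)}"
  shows "widx l k i j = widx l k' i' j' \<longleftrightarrow> k = k' \<and> i = i' \<and> j = j'"
proof
  assume e: "widx l k i j = widx l k' i' j'"
  have "dsum l k = dsum l (k - 1) + l k * (l (k - 1) + 1)"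
    using assms dsum_Suc[of l "k - 1"] by simp
  moreover have "dsum l k' = dsum l (k' - 1) + l k' * (l (k' - 1) + 1)"
    using assms dsum_Suc[of l "k' - 1"] by simp
  ultimately have kk: "k = k'"
    using widx_range[where l=l, OF assms(1-3)] widx_range[where l=l, OF assms(4-6)] e
    by (intro layer_unique[OF assms(1,4), of l "widx l k i j"]) (auto simp: algebra_simps)
  then have "(i - 1) * l (k - 1) + j = (i' - 1) * l (k - 1) + j'" using e by (simp add: widx_def)
  then have "i - 1 = i' - 1 \<and> j = j'" using assms kk by (intro div_mod_pos_eq) auto
  then show "k = k' \<and> i = i' \<and> j = j'" using assms kk by auto
qed simp

lemma affine_bound:
  assumes k: "1 \<le> k" "k \<le> L" and th: "\<forall>q\<in>{1..dsum l L}. \<bar>\<theta> q\<bar> \<le> M"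
    and y: "\<forall>j\<in>{1..l (k - 1)}. \<bar>y j\<bar> \<le> Y" and i: "i \<in> {1..l k}"
  shows "\<bar>affine l k \<theta> y i\<bar> \<le> M * (1 + real (l (k - 1)) * Y)"
proof -
  have b: "\<bar>bias l k \<theta> i\<bar> \<le> M" using th bidx_in[where l=l, OF k i] by (simp add: bias_idx)
  then have M0: "0 \<le> M" by linarith
  have "\<bar>wgt l k \<theta> i j * y j\<bar> \<le> M * Y" if "j \<in> {1..l (k - 1)}" for j
  proof -
    have "\<bar>wgt l k \<theta> i j\<bar> \<le> M" using th widx_in[where l=l, OF k i that] by (simp add: wgt_idx)
    then show ?thesis using y that M0 by (simp add: abs_mult mult_mono)
  qed
  then have "\<bar>\<Sum>j=1..l (k - 1). wgt l k \<theta> i j * y j\<bar> \<le> (\<Sum>j=1..l (k - 1). M * Y)"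
    by (intro order.trans[OF sum_abs] sum_mono) auto
  then show ?thesis using b unfolding affine_def by (simp add: algebra_simps)
qed


fun bnd :: "(nat \<Rightarrow> nat) \<Rightarrow> real \<Rightarrow> real \<Rightarrow> nat \<Rightarrow> real" where
  "bnd l M X 0 = X"
| "bnd l M X (Suc k) = M * (1 + real (l k) * bnd l M X k)"

fun dbnd :: "(nat \<Rightarrow> nat) \<Rightarrow> real \<Rightarrow> real \<Rightarrow> real \<Rightarrow> real \<Rightarrow> nat \<Rightarrow> real" where
  "dbnd l M X c V 0 = 0"
| "dbnd l M X c V (Suc k) = V * (1 + real (l k) * bnd l M X k) + M * real (l k) * c * dbnd l M X c V k"

lemma netw_bound:
  assumes th: "\<forall>q\<in>{1..dsum l L}. \<bar>\<theta> q\<bar> \<le> M" and x: "\<forall>j\<in>{1..l 0}. \<bar>x j\<bar> \<le> X"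
    and sb: "\<And>m y. \<bar>\<sigma> m y\<bar> \<le> \<bar>y\<bar>"
  shows "k \<le> L \<Longrightarrow> i \<in> {1..l k} \<Longrightarrow> \<bar>netw l \<sigma> \<theta> k x i\<bar> \<le> bnd l M X k"
proof (induction k arbitrary: i)
  case 0 then show ?case using x by simp
next
  case (Suc k)
  have "\<forall>j\<in>{1..l (Suc k - 1)}. \<bar>inp l \<sigma> \<theta> k x j\<bar> \<le> bnd l M X k"
  proof
    fix j assume j: "j \<in> {1..l (Suc k - 1)}"
    show "\<bar>inp l \<sigma> \<theta> k x j\<bar> \<le> bnd l M X k"
    proof (cases "k = 0")
      case True then show ?thesis using x j by (simp add: inp_def)
    next
      case False
      then have "\<bar>inp l \<sigma> \<theta> k x j\<bar> \<le> \<bar>netw l \<sigma> \<theta> k x j\<bar>" by (simp add: inp_def sb)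
      also have "\<dots> \<le> bnd l M X k" using Suc j by simp
      finally show ?thesis .
    qed
  qed
  then show ?case unfolding netw_Suc
    using affine_bound[of "Suc k" L l \<theta> M "inp l \<sigma> \<theta> k x" "bnd l M X k" i] Suc.prems th by simp
qed

lemma bnd_nonneg: "0 \<le> M \<Longrightarrow> 0 \<le> X \<Longrightarrow> 0 \<le> bnd l M X k"
  by (induction k) auto

lemma dnet_bound:
  assumes th: "\<forall>q\<in>{1..dsum l L}. \<bar>\<theta> q\<bar> \<le> M" and x: "\<forall>j\<in>{1..l 0}. \<bar>x j\<bar> \<le> X"
    and v: "\<forall>q\<in>{1..dsum l L}. \<bar>v q\<bar> \<le> V"
    and sb: "\<And>m y. \<bar>\<sigma> m y\<bar> \<le> \<bar>y\<bar>" and sb': "\<And>m y. \<bar>\<sigma>' m y\<bar> \<le> c"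
    and M0: "0 \<le> M"
  shows "k \<le> L \<Longrightarrow> i \<in> {1..l k} \<Longrightarrow> \<bar>dnet l \<sigma> \<sigma>' \<theta> v k x i\<bar> \<le> dbnd l M X c V k"
proof (induction k arbitrary: i)
  case 0 then show ?case by simp
next
  case (Suc k)
  have "\<forall>j\<in>{1..l (Suc k - 1)}. \<bar>inp l \<sigma> \<theta> k x j\<bar> \<le> bnd l M X k"
  proof
    fix j assume j: "j \<in> {1..l (Suc k - 1)}"
    show "\<bar>inp l \<sigma> \<theta> k x j\<bar> \<le> bnd l M X k"
    proof (cases "k = 0")
      case True then show ?thesis using x j by (simp add: inp_def)
    next
      case False
      then have "\<bar>inp l \<sigma> \<theta> k x j\<bar> \<le> \<bar>netw l \<sigma> \<theta> k x j\<bar>" by (simp add: inp_def sb)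
      also have "\<dots> \<le> bnd l M X k" using Suc j netw_bound[OF th x sb] by simp
      finally show ?thesis .
    qed
  qed
  then have A: "\<bar>affine l (Suc k) v (inp l \<sigma> \<theta> k x) i\<bar> \<le> V * (1 + real (l k) * bnd l M X k)"
    using affine_bound[of "Suc k" L l v V "inp l \<sigma> \<theta> k x" "bnd l M X k" i] Suc.prems v by simp
  have c0: "0 \<le> c" using sb'[of 0 0] by linarith
  have B: "\<bar>(if k = 0 then 0 else (\<Sum>j=1..l k. wgt l (Suc k) \<theta> i j * (\<sigma>' k (netw l \<sigma> \<theta> k x j) * dnet l \<sigma> \<sigma>' \<theta> v k x j)))\<bar>
      \<le> M * real (l k) * c * dbnd l M X c V k"
  proof (cases "k = 0")
    case True then show ?thesis by simp
  next
    case False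
    have "\<bar>wgt l (Suc k) \<theta> i j * (\<sigma>' k (netw l \<sigma> \<theta> k x j) * dnet l \<sigma> \<sigma>' \<theta> v k x j)\<bar> \<le> M * (c * dbnd l M X c V k)"
      if j: "j \<in> {1..l k}" for j
    proof -
      have w: "\<bar>wgt l (Suc k) \<theta> i j\<bar> \<le> M" using th widx_in[of "Suc k" L i l j] Suc.prems j by (simp add: wgt_idx)
      have d: "\<bar>dnet l \<sigma> \<sigma>' \<theta> v k x j\<bar> \<le> dbnd l M X c V k" using Suc j by simp
      have "\<bar>\<sigma>' k (netw l \<sigma> \<theta> k x j) * dnet l \<sigma> \<sigma>' \<theta> v k x j\<bar> \<le> c * dbnd l M X c V k"
        unfolding abs_mult by (intro mult_mono sb' d c0) auto
      then show ?thesis unfolding abs_mult[of "wgt l (Suc k) \<theta> i j"] by (intro mult_mono w M0) auto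
    qed
    then have "\<bar>\<Sum>j=1..l k. wgt l (Suc k) \<theta> i j * (\<sigma>' k (netw l \<sigma> \<theta> k x j) * dnet l \<sigma> \<sigma>' \<theta> v k x j)\<bar>
        \<le> (\<Sum>j=1..l k. M * (c * dbnd l M X c V k))"
      by (intro order.trans[OF sum_abs] sum_mono) auto
    then show ?thesis using False by (simp add: algebra_simps)
  qed
  show ?case unfolding dnet_Suc dbnd.simps using A B by (smt (verit))
qed

definition relu' :: "real \<Rightarrow> real" where "relu' y = (if y > 0 then 1 else 0)"
definition ev :: "nat \<Rightarrow> nat \<Rightarrow> real" where "ev p q = (if q = p then 1 else 0)"

locale setting =
  fixes L :: nat and l :: "nat \<Rightarrow> nat" and a b A B :: real
    and R :: "real \<Rightarrow> real \<Rightarrow> real"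
    and \<mu> :: "(nat \<Rightarrow> real) measure"
    and f :: "(nat \<Rightarrow> real) \<Rightarrow> nat \<Rightarrow> real"
  assumes L_pos: "L \<ge> 1"
    and l_pos: "\<And>k. l k \<ge> 1"
    and ab: "a < b"
    and AB: "0 < A" "A < B"
    and R_C1: "\<And>r. r \<ge> 1 \<Longrightarrow> \<exists>R'. continuous_on UNIV R' \<and>
                  (\<forall>x. (R r has_real_derivative R' x) (at x))"
    and R_low: "\<And>r x. r \<ge> 1 \<Longrightarrow> x \<le> A / r \<Longrightarrow> R r x = 0"
    and R_bnd: "\<And>r y. r \<ge> 1 \<Longrightarrow> 0 \<le> R r y \<and> R r y \<le> max y 0"
    and R_high: "\<And>r z. r \<ge> 1 \<Longrightarrow> z \<ge> B / r \<Longrightarrow> R r z = z"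
    and R_deriv_bdd: "\<exists>c. \<forall>r\<ge>1. \<forall>x. \<bar>deriv (R r) x\<bar> \<le> c"
    and mu_sets: "sets \<mu> = sets (PiM {1..l 0} (\<lambda>_. restrict_space lborel {a..b}))"
    and mu_fin: "finite_measure \<mu>"
    and f_meas: "\<And>i. i \<in> {1..l L} \<Longrightarrow> (\<lambda>x. f x i) \<in> borel_measurable \<mu>"
    and loss_int: "\<And>r \<theta>. r \<ge> 1 \<Longrightarrow> integrable \<mu> (sqerr l L (netR l R r \<theta> L) f)"
    and loss_int_inf: "\<And>\<theta>. integrable \<mu> (sqerr l L (netInf l \<theta> L) f)"
begin

lemma R_deriv: "s \<ge> 1 \<Longrightarrow> (R s has_real_derivative deriv (R s) y) (at y)"
  using R_C1[of s] DERIV_imp_deriv by metis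

lemma R_deriv_cont: "s \<ge> 1 \<Longrightarrow> continuous_on UNIV (deriv (R s))"
proof -
  assume s: "s \<ge> 1"
  obtain R' where R': "continuous_on UNIV R'" "\<And>x. (R s has_real_derivative R' x) (at x)"
    using R_C1[OF s] by blast
  have "deriv (R s) = R'" using R'(2) DERIV_imp_deriv by blast
  then show ?thesis using R'(1) by simp
qed

lemma R_cont: "s \<ge> 1 \<Longrightarrow> continuous_on UNIV (R s)"
  by (intro continuous_at_imp_continuous_on ballI DERIV_isCont[OF R_deriv])

lemma R_meas: "s \<ge> 1 \<Longrightarrow> R s \<in> borel_measurable borel"
  by (rule borel_measurable_continuous_onI[OF R_cont])

lemma R_deriv_meas: "s \<ge> 1 \<Longrightarrow> deriv (R s) \<in> borel_measurable borel"
  by (rule borel_measurable_continuous_onI[OF R_deriv_cont])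

definition cR where "cR = (SOME c. \<forall>r\<ge>1. \<forall>x. \<bar>deriv (R r) x\<bar> \<le> c)"

lemma cR_bound: "r \<ge> 1 \<Longrightarrow> \<bar>deriv (R r) x\<bar> \<le> cR"
  using someI_ex[OF R_deriv_bdd] unfolding cR_def by blast

lemma cR_nonneg: "0 \<le> cR"
  using cR_bound[of 1 0] by linarith

lemma R_abs: "s \<ge> 1 \<Longrightarrow> \<bar>R s y\<bar> \<le> \<bar>y\<bar>"
  using R_bnd[of s y] by auto

lemma R_lip:
  assumes s: "s \<ge> 1"
  shows "\<bar>R s y - R s z\<bar> \<le> cR * \<bar>y - z\<bar>"
proof -
  have main: "\<bar>R s v - R s u\<bar> \<le> cR * \<bar>v - u\<bar>" if uv: "u < v" for u v
  proof -
    obtain w where "u < w" "w < v" "R s v - R s u = (v - u) * deriv (R s) w"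
      using MVT2[OF uv, of "R s" "deriv (R s)"] R_deriv[OF s] by blast
    then have "\<bar>R s v - R s u\<bar> = \<bar>v - u\<bar> * \<bar>deriv (R s) w\<bar>" by (simp add: abs_mult)
    also have "\<dots> \<le> \<bar>v - u\<bar> * cR" by (intro mult_left_mono cR_bound s) auto
    finally show ?thesis by (simp add: mult.commute)
  qed
  consider "z < y" | "y < z" | "y = z" by linarith
  then show ?thesis
  proof cases
    case 1 then show ?thesis using main by blast
  next
    case 2 then show ?thesis using main[OF 2] by (simp add: abs_minus_commute)
  qed simp
qed

lemma R_relu:
  assumes s: "s \<ge> 1"
  shows "\<bar>R s y - relu y\<bar> \<le> B / s"
proof -
  have Bs: "0 < B / s" using AB s by simp
  consider "y \<ge> B / s" | "y \<le> 0" | "0 < y \<and> y < B / s" by linarith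
  then show ?thesis
  proof cases
    case 1 then show ?thesis using R_high[OF s 1] Bs by (simp add: relu_def)
  next
    case 2 then show ?thesis using R_bnd[OF s, of y] Bs by (simp add: relu_def)
  next
    case 3 then show ?thesis using R_bnd[OF s, of y] by (simp add: relu_def)
  qed
qed

lemma R_d1:
  assumes s: "s \<ge> 1" and y: "y > B / s"
  shows "deriv (R s) y = 1"
proof -
  have "((\<lambda>z. z) has_real_derivative 1) (at y)" by (rule DERIV_ident)
  then have "(R s has_real_derivative 1) (at y)"
    by (rule has_field_derivative_transform_within_open[where S="{B / s<..}"])
       (use y R_high[OF s] in auto)
  then show ?thesis by (rule DERIV_imp_deriv)
qed

lemma R_d0:
  assumes s: "s \<ge> 1" and y: "y < A / s"
  shows "deriv (R s) y = 0"
proof -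
  have "((\<lambda>z. 0) has_real_derivative 0) (at y)" by (rule DERIV_const)
  then have "(R s has_real_derivative 0) (at y)"
    by (rule has_field_derivative_transform_within_open[where S="{..<A / s}"])
       (use y R_low[OF s] in auto)
  then show ?thesis by (rule DERIV_imp_deriv)
qed

lemma sr_ge1: "r \<ge> 1 \<Longrightarrow> 1 \<le> r powr (1 / real m)"
  by (rule ge_one_powr_ge_zero) auto

end

lemma netw_zero: "netw l \<sigma> (\<lambda>q. 0) (Suc k) x i = 0"
  unfolding netw_Suc by (rule affine_zero)

lemma abs_le_1_sq: "\<bar>y::real\<bar> \<le> 1 + y\<^sup>2"
proof (cases "\<bar>y\<bar> \<le> 1")
  case True then show ?thesis by (smt (verit) zero_le_power2)
next
  case False
  then have "\<bar>y\<bar> * 1 \<le> \<bar>y\<bar> * \<bar>y\<bar>" by (intro mult_left_mono) auto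
  then show ?thesis by (simp add: power2_eq_square[symmetric])
qed

context setting begin

definition X0 where "X0 = max \<bar>a\<bar> \<bar>b\<bar>"

lemma X0_nonneg: "0 \<le> X0" unfolding X0_def by auto

lemma space_mu: "space \<mu> = PiE {1..l 0} (\<lambda>_. {a..b})"
  using sets_eq_imp_space_eq[OF mu_sets] by (simp add: space_PiM space_restrict_space)

lemma x_bound: "x \<in> space \<mu> \<Longrightarrow> \<forall>j\<in>{1..l 0}. \<bar>x j\<bar> \<le> X0"
  unfolding space_mu X0_def by (auto simp: PiE_iff)

lemma x_meas: "j \<in> {1..l 0} \<Longrightarrow> (\<lambda>x. x j) \<in> borel_measurable \<mu>"
proof -
  assume j: "j \<in> {1..l 0}"
  have i: "(\<lambda>x. x) \<in> borel_measurable (restrict_space lborel {a..b})"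
    by (intro measurable_restrict_space1) simp
  have "(\<lambda>x. x j) \<in> borel_measurable (PiM {1..l 0} (\<lambda>_. restrict_space lborel {a..b}))"
    using measurable_compose[OF measurable_component_singleton[OF j] i] by simp
  then show ?thesis using measurable_cong_sets[OF mu_sets refl] by blast
qed

lemma fsq_int: "integrable \<mu> (\<lambda>x. \<Sum>i=1..l L. (f x i)\<^sup>2)"
proof -
  have "sqerr l L (netInf l (\<lambda>q. 0) L) f = (\<lambda>x. \<Sum>i=1..l L. (f x i)\<^sup>2)"
    using L_pos by (cases L) (auto simp: sqerr_def netInf_def netw_zero)
  then show ?thesis using loss_int_inf[of "\<lambda>q. 0"] by simp
qed

lemma f_int: "i \<in> {1..l L} \<Longrightarrow> integrable \<mu> (\<lambda>x. f x i)"
proof -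
  assume i: "i \<in> {1..l L}"
  interpret finite_measure \<mu> by (rule mu_fin)
  have m: "(\<lambda>x. f x i) \<in> borel_measurable \<mu>" by (rule f_meas[OF i])
  have "integrable \<mu> (\<lambda>x. (f x i)\<^sup>2)"
    apply (rule Bochner_Integration.integrable_bound[OF fsq_int])
    using m apply measurable
    apply (rule AE_I2)
    using i by (auto intro!: order.trans[OF _ abs_ge_self] member_le_sum)
  then have "integrable \<mu> (\<lambda>x. 1 + (f x i)\<^sup>2)" by auto
  then show ?thesis
    by (rule Bochner_Integration.integrable_bound) (use m abs_le_1_sq in auto)
qed

definition gint :: "(nat \<Rightarrow> real \<Rightarrow> real) \<Rightarrow> (nat \<Rightarrow> real \<Rightarrow> real) \<Rightarrow> (nat \<Rightarrow> real) \<Rightarrow> (nat \<Rightarrow> real) \<Rightarrow> (nat \<Rightarrow> real) \<Rightarrow> real" where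
  "gint \<sigma> \<sigma>' \<theta> v x = (\<Sum>m=1..l L. 2 * (netw l \<sigma> \<theta> L x m - f x m) * dnet l \<sigma> \<sigma>' \<theta> v L x m)"

definition wbd :: "real \<Rightarrow> real \<Rightarrow> real \<Rightarrow> (nat \<Rightarrow> real) \<Rightarrow> real" where
  "wbd M c V x = (\<Sum>m=1..l L. 2 * (bnd l M X0 L + \<bar>f x m\<bar>) * dbnd l M X0 c V L)"

lemma wbd_int: "integrable \<mu> (wbd M c V)"
proof -
  interpret finite_measure \<mu> by (rule mu_fin)
  show ?thesis unfolding wbd_def
    by (auto intro!: Bochner_Integration.integrable_sum integrable_mult_left integrable_mult_right
        Bochner_Integration.integrable_add integrable_abs f_int)
qed

lemma gint_bound:
  assumes x: "x \<in> space \<mu>" and th: "\<forall>q\<in>{1..dsum l L}. \<bar>\<theta> q\<bar> \<le> M"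
    and v: "\<forall>q\<in>{1..dsum l L}. \<bar>v q\<bar> \<le> V"
    and sb: "\<And>m y. \<bar>\<sigma> m y\<bar> \<le> \<bar>y\<bar>" and sb': "\<And>m y. \<bar>\<sigma>' m y\<bar> \<le> c" and M0: "0 \<le> M"
  shows "\<bar>gint \<sigma> \<sigma>' \<theta> v x\<bar> \<le> wbd M c V x"
proof -
  have "\<bar>2 * (netw l \<sigma> \<theta> L x m - f x m) * dnet l \<sigma> \<sigma>' \<theta> v L x m\<bar> \<le> 2 * (bnd l M X0 L + \<bar>f x m\<bar>) * dbnd l M X0 c V L"
    if m: "m \<in> {1..l L}" for m
  proof -
    have n: "\<bar>netw l \<sigma> \<theta> L x m\<bar> \<le> bnd l M X0 L" using netw_bound[OF th x_bound[OF x] sb] m by simp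
    have d: "\<bar>dnet l \<sigma> \<sigma>' \<theta> v L x m\<bar> \<le> dbnd l M X0 c V L" using dnet_bound[OF th x_bound[OF x] v sb sb' M0] m by simp
    have "\<bar>netw l \<sigma> \<theta> L x m - f x m\<bar> \<le> bnd l M X0 L + \<bar>f x m\<bar>" using n by linarith
    then show ?thesis unfolding abs_mult using d by (intro mult_mono) auto
  qed
  then show ?thesis unfolding gint_def wbd_def by (intro order.trans[OF sum_abs] sum_mono) auto
qed

lemma gint_meas:
  assumes sm: "\<And>m. \<sigma> m \<in> borel_measurable borel" and sm': "\<And>m. \<sigma>' m \<in> borel_measurable borel"
  shows "gint \<sigma> \<sigma>' \<theta> v \<in> borel_measurable \<mu>"
proof -
  obtain L' where L': "L = Suc L'" using L_pos by (cases L) auto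
  have n: "(\<lambda>x. netw l \<sigma> \<theta> L x m) \<in> borel_measurable \<mu>" for m
    unfolding L' by (rule netw_meas[OF x_meas sm])
  have d: "(\<lambda>x. dnet l \<sigma> \<sigma>' \<theta> v L x m) \<in> borel_measurable \<mu>" for m
    unfolding L' by (rule dnet_meas[OF x_meas sm sm'])
  show ?thesis unfolding gint_def
    by (intro borel_measurable_sum borel_measurable_times borel_measurable_const borel_measurable_diff n d f_meas) auto
qed

lemma gint_int:
  assumes th: "\<forall>q\<in>{1..dsum l L}. \<bar>\<theta> q\<bar> \<le> M"
    and v: "\<forall>q\<in>{1..dsum l L}. \<bar>v q\<bar> \<le> V"
    and sb: "\<And>m y. \<bar>\<sigma> m y\<bar> \<le> \<bar>y\<bar>" and sb': "\<And>m y. \<bar>\<sigma>' m y\<bar> \<le> c" and M0: "0 \<le> M"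
    and sm: "\<And>m. \<sigma> m \<in> borel_measurable borel" and sm': "\<And>m. \<sigma>' m \<in> borel_measurable borel"
  shows "integrable \<mu> (gint \<sigma> \<sigma>' \<theta> v)"
proof (rule Bochner_Integration.integrable_bound[OF wbd_int[of M c V] gint_meas[OF sm sm']], rule AE_I2)
  fix x assume x: "x \<in> space \<mu>"
  have "\<bar>gint \<sigma> \<sigma>' \<theta> v x\<bar> \<le> wbd M c V x" by (rule gint_bound[OF x th v sb sb' M0])
  then show "norm (gint \<sigma> \<sigma>' \<theta> v x) \<le> norm (wbd M c V x)" by simp
qed

end

context setting begin

definition sig :: "real \<Rightarrow> nat \<Rightarrow> real \<Rightarrow> real" where "sig r = (\<lambda>m. R (r powr (1 / real m)))"
definition sig' :: "real \<Rightarrow> nat \<Rightarrow> real \<Rightarrow> real" where "sig' r = (\<lambda>m. deriv (R (r powr (1 / real m))))"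

lemma sig_deriv: "r \<ge> 1 \<Longrightarrow> (sig r m has_real_derivative sig' r m y) (at y)"
  unfolding sig_def sig'_def by (rule R_deriv[OF sr_ge1])
lemma sig_abs: "r \<ge> 1 \<Longrightarrow> \<bar>sig r m y\<bar> \<le> \<bar>y\<bar>"
  unfolding sig_def by (rule R_abs[OF sr_ge1])
lemma sig'_abs: "r \<ge> 1 \<Longrightarrow> \<bar>sig' r m y\<bar> \<le> cR"
  unfolding sig'_def by (rule cR_bound[OF sr_ge1])
lemma sig_meas: "r \<ge> 1 \<Longrightarrow> sig r m \<in> borel_measurable borel"
  unfolding sig_def by (rule R_meas[OF sr_ge1])
lemma sig'_meas: "r \<ge> 1 \<Longrightarrow> sig' r m \<in> borel_measurable borel"
  unfolding sig'_def by (rule R_deriv_meas[OF sr_ge1])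

definition Mth :: "(nat \<Rightarrow> real) \<Rightarrow> real" where "Mth \<theta> = (\<Sum>p=1..dsum l L. \<bar>\<theta> p\<bar>)"

lemma Mth_nonneg: "0 \<le> Mth \<theta>" unfolding Mth_def by (auto intro: sum_nonneg)
lemma Mth_bound: "\<forall>p\<in>{1..dsum l L}. \<bar>\<theta> p\<bar> \<le> Mth \<theta>"
  unfolding Mth_def by (auto intro!: member_le_sum)

lemma ev_bound: "\<forall>p\<in>{1..dsum l L}. \<bar>ev q p\<bar> \<le> 1" by (simp add: ev_def)

lemma grad_formula:
  assumes r: "r \<ge> 1"
  shows "grad (lossR l L R \<mu> f r) \<theta> q = (\<integral>x. gint (sig r) (sig' r) \<theta> (ev q) x \<partial>\<mu>)"
proof -
  define \<theta>t where "\<theta>t t = (\<lambda>p. \<theta> p + t * ev q p)" for t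
  have eq: "\<theta>(q := \<theta> q + t) = \<theta>t t" for t by (auto simp: \<theta>t_def ev_def)
  define \<phi> where "\<phi> t x = sqerr l L (netw l (sig r) (\<theta>t t) L) f x" for t x
  have lossR_eq: "lossR l L R \<mu> f r (\<theta>(q := \<theta> q + t)) = (\<integral>x. \<phi> t x \<partial>\<mu>)" for t
    unfolding lossR_def eq \<phi>_def netR_def sig_def ..
  have D: "((\<lambda>t. \<integral>x. \<phi> t x \<partial>\<mu>) has_real_derivative (\<integral>x. gint (sig r) (sig' r) (\<theta>t 0) (ev q) x \<partial>\<mu>)) (at 0)"
  proof (rule deriv_integral[where w="wbd (Mth \<theta> + 1) cR 1"])
    show "integrable \<mu> (\<phi> t)" for t
      using loss_int[OF r, of "\<theta>t t"] unfolding \<phi>_def netR_def sig_def .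
    show "((\<lambda>s. \<phi> s x) has_real_derivative gint (sig r) (sig' r) (\<theta>t t) (ev q) x) (at t)" for x t
    proof -
      have "((\<lambda>s. (netw l (sig r) (\<lambda>p. \<theta> p + s * ev q p) L x m - f x m)\<^sup>2) has_real_derivative
              2 * (netw l (sig r) (\<lambda>p. \<theta> p + t * ev q p) L x m - f x m) * dnet l (sig r) (sig' r) (\<lambda>p. \<theta> p + t * ev q p) (ev q) L x m) (at t)" for m
      proof -
        have "((\<lambda>s. (netw l (sig r) (\<lambda>p. \<theta> p + s * ev q p) L x m - f x m) ^ 2) has_real_derivative
              of_nat 2 * ((dnet l (sig r) (sig' r) (\<lambda>p. \<theta> p + t * ev q p) (ev q) L x m - 0) *
               (netw l (sig r) (\<lambda>p. \<theta> p + t * ev q p) L x m - f x m) ^ (2 - Suc 0))) (at t)"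
          by (intro DERIV_power DERIV_diff netw_deriv[where \<sigma>="sig r" and \<sigma>'="sig' r", OF sig_deriv[OF r]] DERIV_const)
        then show ?thesis by (simp add: algebra_simps)
      qed
      then show ?thesis unfolding \<phi>_def sqerr_def gint_def \<theta>t_def
        by (intro DERIV_sum) auto
    qed
    show "gint (sig r) (sig' r) (\<theta>t 0) (ev q) \<in> borel_measurable \<mu>"
      by (rule gint_meas[OF sig_meas[OF r] sig'_meas[OF r]])
    show "integrable \<mu> (wbd (Mth \<theta> + 1) cR 1)" by (rule wbd_int)
    show "\<bar>gint (sig r) (sig' r) (\<theta>t t) (ev q) x\<bar> \<le> wbd (Mth \<theta> + 1) cR 1 x"
      if x: "x \<in> space \<mu>" and t: "\<bar>t\<bar> \<le> 1" for x t
    proof (rule gint_bound[OF x _ ev_bound sig_abs[OF r] sig'_abs[OF r]])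
      show "0 \<le> Mth \<theta> + 1" using Mth_nonneg[of \<theta>] by linarith
      show "\<forall>p\<in>{1..dsum l L}. \<bar>\<theta>t t p\<bar> \<le> Mth \<theta> + 1"
      proof
        fix p assume p: "p \<in> {1..dsum l L}"
        have "\<bar>\<theta>t t p\<bar> \<le> \<bar>\<theta> p\<bar> + \<bar>t\<bar> * \<bar>ev q p\<bar>" unfolding \<theta>t_def by (simp add: abs_mult[symmetric] abs_triangle_ineq)
        also have "\<dots> \<le> Mth \<theta> + 1 * 1"
          using Mth_bound[of \<theta>] p t by (intro add_mono mult_mono) (auto simp: ev_def)
        finally show "\<bar>\<theta>t t p\<bar> \<le> Mth \<theta> + 1" by simp
      qed
    qed
  qed
  have "\<theta>t 0 = \<theta>" by (simp add: \<theta>t_def)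
  then show ?thesis
    unfolding grad_def lossR_eq using DERIV_imp_deriv[OF D] by simp
qed

end

lemma relu_meas: "relu \<in> borel_measurable borel" unfolding relu_def by measurable
lemma relu'_meas: "relu' \<in> borel_measurable borel" unfolding relu'_def by measurable
lemma relu_abs: "\<bar>relu y\<bar> \<le> \<bar>y\<bar>" unfolding relu_def by auto
lemma relu'_abs: "\<bar>relu' y\<bar> \<le> 1" unfolding relu'_def by auto

lemma netw_one: "netw l \<sigma> \<theta> (Suc 0) x = affine l 1 \<theta> x" by simp

definition rho :: "nat \<Rightarrow> real \<Rightarrow> real" where
  "rho k r = (if k \<le> 1 then 0 else r powr (-(1 / (real k - 1))))"

lemma rho_nonneg: "0 \<le> rho k r" unfolding rho_def by auto

lemma rho_le: "1 \<le> k \<Longrightarrow> 1 \<le> r \<Longrightarrow> rho k r \<le> r powr (-(1 / real k))"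
  unfolding rho_def by (auto intro!: powr_mono simp: field_simps)

lemma rho_Suc: "1 \<le> k \<Longrightarrow> rho (Suc k) r = r powr (-(1 / real k))"
  unfolding rho_def by auto

lemma rho_lim: "((\<lambda>r. rho k r) \<longlongrightarrow> 0) at_top"
proof (cases "k \<le> 1")
  case True then show ?thesis unfolding rho_def by simp
next
  case False
  then have "((\<lambda>r. r powr (-(1 / (real k - 1)))) \<longlongrightarrow> 0) at_top"
    by (intro tendsto_neg_powr filterlim_ident) auto
  then show ?thesis using False unfolding rho_def by simp
qed

lemma powr_inv_lim: "1 \<le> k \<Longrightarrow> ((\<lambda>r. r powr (-(1 / real k))) \<longlongrightarrow> 0) at_top"
  by (intro tendsto_neg_powr filterlim_ident) auto

lemma div_powr: "0 < r \<Longrightarrow> c / r powr (1 / real k) = c * r powr (-(1 / real k))"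
  by (simp add: powr_minus divide_inverse)

context setting begin

lemma sig_relu:
  assumes r: "r \<ge> 1" and k: "1 \<le> k"
  shows "\<bar>sig r k y' - relu y\<bar> \<le> cR * \<bar>y' - y\<bar> + B * r powr (-(1 / real k))"
proof -
  have s: "1 \<le> r powr (1 / real k)" by (rule sr_ge1[OF r])
  have "\<bar>sig r k y' - relu y\<bar> \<le> \<bar>sig r k y' - sig r k y\<bar> + \<bar>sig r k y - relu y\<bar>" by linarith
  also have "\<dots> \<le> cR * \<bar>y' - y\<bar> + B / r powr (1 / real k)"
    unfolding sig_def by (intro add_mono R_lip[OF s] R_relu[OF s])
  finally show ?thesis using r by (simp add: div_powr)
qed

lemma rate:
  "\<exists>C\<ge>0. \<forall>r\<ge>1. \<forall>i\<in>{1..l (Suc k)}.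
     \<bar>netw l (sig r) \<theta> (Suc k) x i - netw l (\<lambda>m. relu) \<theta> (Suc k) x i\<bar> \<le> C * rho (Suc k) r"
proof (induction k)
  case 0
  show ?case by (rule exI[of _ 0]) simp
next
  case (Suc k)
  then obtain C where C: "C \<ge> 0" "\<And>r i. r \<ge> 1 \<Longrightarrow> i \<in> {1..l (Suc k)} \<Longrightarrow>
     \<bar>netw l (sig r) \<theta> (Suc k) x i - netw l (\<lambda>m. relu) \<theta> (Suc k) x i\<bar> \<le> C * rho (Suc k) r" by blast
  define W where "W = (\<Sum>i=1..l (Suc (Suc k)). \<Sum>j=1..l (Suc k). \<bar>wgt l (Suc (Suc k)) \<theta> i j\<bar>)"
  have W0: "0 \<le> W" unfolding W_def by (auto intro!: sum_nonneg)
  show ?case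
  proof (intro exI[of _ "W * (cR * C + B)"] conjI allI impI ballI)
    show "0 \<le> W * (cR * C + B)" using W0 C(1) cR_nonneg AB by auto
    fix r i assume r: "(1::real) \<le> r" and i: "i \<in> {1..l (Suc (Suc k))}"
    let ?p = "r powr (-(1 / real (Suc k)))"
    have p0: "0 \<le> ?p" by simp
    have trm: "\<bar>sig r (Suc k) (netw l (sig r) \<theta> (Suc k) x j) - relu (netw l (\<lambda>m. relu) \<theta> (Suc k) x j)\<bar> \<le> (cR * C + B) * ?p"
      if j: "j \<in> {1..l (Suc k)}" for j
    proof -
      have "\<bar>sig r (Suc k) (netw l (sig r) \<theta> (Suc k) x j) - relu (netw l (\<lambda>m. relu) \<theta> (Suc k) x j)\<bar>
         \<le> cR * \<bar>netw l (sig r) \<theta> (Suc k) x j - netw l (\<lambda>m. relu) \<theta> (Suc k) x j\<bar> + B * ?p"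
        by (rule sig_relu[OF r]) simp
      also have "\<dots> \<le> cR * (C * ?p) + B * ?p"
      proof -
        have "C * rho (Suc k) r \<le> C * ?p" using rho_le[of "Suc k" r] r C(1) by (intro mult_left_mono) auto
        then show ?thesis using C(2)[OF r j] cR_nonneg AB by (intro add_mono mult_left_mono) auto
      qed
      finally show ?thesis by (simp add: algebra_simps)
    qed
    have "netw l (sig r) \<theta> (Suc (Suc k)) x i - netw l (\<lambda>m. relu) \<theta> (Suc (Suc k)) x i =
      (\<Sum>j=1..l (Suc k). wgt l (Suc (Suc k)) \<theta> i j *
          (sig r (Suc k) (netw l (sig r) \<theta> (Suc k) x j) - relu (netw l (\<lambda>m. relu) \<theta> (Suc k) x j)))"
      by (simp add: affine_def algebra_simps sum_subtractf)
    then have "\<bar>netw l (sig r) \<theta> (Suc (Suc k)) x i - netw l (\<lambda>m. relu) \<theta> (Suc (Suc k)) x i\<bar>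
      \<le> (\<Sum>j=1..l (Suc k). \<bar>wgt l (Suc (Suc k)) \<theta> i j\<bar> * ((cR * C + B) * ?p))"
      using trm by (auto intro!: order.trans[OF sum_abs] sum_mono mult_left_mono simp: abs_mult)
    also have "\<dots> = (\<Sum>j=1..l (Suc k). \<bar>wgt l (Suc (Suc k)) \<theta> i j\<bar>) * ((cR * C + B) * ?p)"
      by (simp add: sum_distrib_right)
    also have "\<dots> \<le> W * ((cR * C + B) * ?p)"
    proof (rule mult_right_mono)
      show "(\<Sum>j=1..l (Suc k). \<bar>wgt l (Suc (Suc k)) \<theta> i j\<bar>) \<le> W"
        unfolding W_def using i by (intro member_le_sum[of i _ "\<lambda>i. \<Sum>j=1..l (Suc k). \<bar>wgt l (Suc (Suc k)) \<theta> i j\<bar>"]) (auto intro: sum_nonneg)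
      show "0 \<le> (cR * C + B) * ?p" using cR_nonneg C(1) AB by auto
    qed
    also have "\<dots> = W * (cR * C + B) * rho (Suc (Suc k)) r" by (simp add: rho_Suc)
    finally show "\<bar>netw l (sig r) \<theta> (Suc (Suc k)) x i - netw l (\<lambda>m. relu) \<theta> (Suc (Suc k)) x i\<bar>
       \<le> W * (cR * C + B) * rho (Suc (Suc k)) r" .
  qed
qed

end

context setting begin

lemma N_diff_lim:
  assumes i: "i \<in> {1..l (Suc k)}"
  shows "((\<lambda>r. netw l (sig r) \<theta> (Suc k) x i - netw l (\<lambda>m. relu) \<theta> (Suc k) x i) \<longlongrightarrow> 0) at_top"
proof -
  obtain C where C: "C \<ge> 0" "\<And>r i. r \<ge> 1 \<Longrightarrow> i \<in> {1..l (Suc k)} \<Longrightarrow>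
     \<bar>netw l (sig r) \<theta> (Suc k) x i - netw l (\<lambda>m. relu) \<theta> (Suc k) x i\<bar> \<le> C * rho (Suc k) r"
    using rate[of k \<theta> x] by blast
  show ?thesis
  proof (rule Lim_null_comparison)
    show "\<forall>\<^sub>F r in at_top. norm (netw l (sig r) \<theta> (Suc k) x i - netw l (\<lambda>m. relu) \<theta> (Suc k) x i) \<le> C * rho (Suc k) r"
      using eventually_ge_at_top[of 1] by eventually_elim (use C(2) i in auto)
    show "((\<lambda>r. C * rho (Suc k) r) \<longlongrightarrow> 0) at_top"
      using tendsto_mult_right_zero[OF rho_lim] by simp
  qed
qed

lemma N_lim:
  assumes i: "i \<in> {1..l (Suc k)}"
  shows "((\<lambda>r. netw l (sig r) \<theta> (Suc k) x i) \<longlongrightarrow> netw l (\<lambda>m. relu) \<theta> (Suc k) x i) at_top"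
proof -
  have "((\<lambda>r. (netw l (sig r) \<theta> (Suc k) x i - netw l (\<lambda>m. relu) \<theta> (Suc k) x i) + netw l (\<lambda>m. relu) \<theta> (Suc k) x i)
      \<longlongrightarrow> 0 + netw l (\<lambda>m. relu) \<theta> (Suc k) x i) at_top"
    by (intro tendsto_add N_diff_lim[OF i] tendsto_const)
  then show ?thesis by simp
qed

lemma sigN_lim:
  assumes i: "i \<in> {1..l (Suc k)}"
  shows "((\<lambda>r. sig r (Suc k) (netw l (sig r) \<theta> (Suc k) x i)) \<longlongrightarrow> relu (netw l (\<lambda>m. relu) \<theta> (Suc k) x i)) at_top"
proof -
  let ?d = "\<lambda>r. netw l (sig r) \<theta> (Suc k) x i - netw l (\<lambda>m. relu) \<theta> (Suc k) x i"
  have "((\<lambda>r. sig r (Suc k) (netw l (sig r) \<theta> (Suc k) x i) - relu (netw l (\<lambda>m. relu) \<theta> (Suc k) x i)) \<longlongrightarrow> 0) at_top"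
  proof (rule Lim_null_comparison)
    show "\<forall>\<^sub>F r in at_top. norm (sig r (Suc k) (netw l (sig r) \<theta> (Suc k) x i) - relu (netw l (\<lambda>m. relu) \<theta> (Suc k) x i))
        \<le> cR * \<bar>?d r\<bar> + B * r powr (-(1 / real (Suc k)))"
      using eventually_ge_at_top[of 1] by eventually_elim (unfold real_norm_def, rule sig_relu, auto)
    have "((\<lambda>r. cR * \<bar>?d r\<bar> + B * r powr (-(1 / real (Suc k)))) \<longlongrightarrow> cR * \<bar>0\<bar> + B * 0) at_top"
      by (intro tendsto_add tendsto_mult tendsto_const tendsto_rabs N_diff_lim[OF i] powr_inv_lim) auto
    then show "((\<lambda>r. cR * \<bar>?d r\<bar> + B * r powr (-(1 / real (Suc k)))) \<longlongrightarrow> 0) at_top" by simp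
  qed
  from tendsto_add[OF this tendsto_const[of "relu (netw l (\<lambda>m. relu) \<theta> (Suc k) x i)"]] show ?thesis by simp
qed

lemma sig'N_lim:
  assumes i: "i \<in> {1..l (Suc k)}"
  shows "((\<lambda>r. sig' r (Suc k) (netw l (sig r) \<theta> (Suc k) x i)) \<longlongrightarrow> relu' (netw l (\<lambda>m. relu) \<theta> (Suc k) x i)) at_top"
proof -
  let ?N = "\<lambda>r. netw l (sig r) \<theta> (Suc k) x i"
  let ?y = "netw l (\<lambda>m. relu) \<theta> (Suc k) x i"
  let ?s = "\<lambda>r. r powr (1 / real (Suc k))"
  have s1: "r \<ge> 1 \<Longrightarrow> 1 \<le> ?s r" for r by (rule sr_ge1)
  have Nl: "(?N \<longlongrightarrow> ?y) at_top" by (rule N_lim[OF i])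
  have ev: "\<forall>\<^sub>F r in at_top. sig' r (Suc k) (?N r) = relu' ?y"
  proof -
    consider "?y > 0" | "?y < 0" | "?y = 0" by linarith
    then show ?thesis
    proof cases
      case 1
      have "?y / 2 < ?y" using 1 by simp
      from order_tendstoD(1)[OF Nl this] have e1: "\<forall>\<^sub>F r in at_top. ?N r > ?y / 2" by simp
      have "((\<lambda>r. B * r powr (-(1 / real (Suc k)))) \<longlongrightarrow> B * 0) at_top"
        by (intro tendsto_mult tendsto_const powr_inv_lim) auto
      then have lim0: "((\<lambda>r. B * r powr (-(1 / real (Suc k)))) \<longlongrightarrow> 0) at_top" by simp
      have "0 < ?y / 2" using 1 by simp
      from order_tendstoD(2)[OF lim0 this]
      have e2: "\<forall>\<^sub>F r in at_top. B * r powr (-(1 / real (Suc k))) < ?y / 2" .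
      show ?thesis using e1 e2 eventually_ge_at_top[of 1]
      proof eventually_elim
        case (elim r)
        have "B / ?s r = B * r powr (-(1 / real (Suc k)))" by (rule div_powr) (use elim in simp)
        then have "?N r > B / ?s r" using elim by linarith
        then have "deriv (R (?s r)) (?N r) = 1" by (intro R_d1 s1) (use elim in auto)
        then show ?case using 1 by (simp add: sig'_def relu'_def)
      qed
    next
      case 2
      have e1: "\<forall>\<^sub>F r in at_top. ?N r < 0" using order_tendstoD(2)[OF Nl] 2 by simp
      show ?thesis using e1 eventually_ge_at_top[of 1]
      proof eventually_elim
        case (elim r)
        have "0 < A / ?s r" using AB elim by (intro divide_pos_pos) auto
        then have "deriv (R (?s r)) (?N r) = 0" by (intro R_d0 s1) (use elim in auto)
        then show ?case using 2 by (simp add: sig'_def relu'_def)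
      qed
    next
      case 3
      obtain C where C: "C \<ge> 0" "\<And>r i. r \<ge> 1 \<Longrightarrow> i \<in> {1..l (Suc k)} \<Longrightarrow>
         \<bar>netw l (sig r) \<theta> (Suc k) x i - netw l (\<lambda>m. relu) \<theta> (Suc k) x i\<bar> \<le> C * rho (Suc k) r"
        using rate[of k \<theta> x] by blast
      have small: "\<forall>\<^sub>F r in at_top. C * rho (Suc k) r < A * r powr (-(1 / real (Suc k)))"
      proof (cases "k = 0")
        case True
        show ?thesis using eventually_ge_at_top[of 1]
          by eventually_elim (use True AB in \<open>simp add: rho_def\<close>)
      next
        case False
        define e where "e = 1 / real k - 1 / real (Suc k)"
        have e0: "0 < e" unfolding e_def using False by (simp add: field_simps add_pos_nonneg)
        have "((\<lambda>r. (C / A) * r powr (- e)) \<longlongrightarrow> (C / A) * 0) at_top"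
          by (intro tendsto_mult tendsto_const tendsto_neg_powr filterlim_ident) (use e0 in auto)
        then have lim0: "((\<lambda>r. (C / A) * r powr (- e)) \<longlongrightarrow> 0) at_top" by simp
        have "(0::real) < 1" by simp
        from order_tendstoD(2)[OF lim0 this]
        have "\<forall>\<^sub>F r in at_top. (C / A) * r powr (- e) < 1" .
        then show ?thesis using eventually_ge_at_top[of 1]
        proof eventually_elim
          case (elim r)
          have rp: "0 < r powr (-(1 / real (Suc k)))" using elim by simp
          have "rho (Suc k) r = r powr (- e) * r powr (-(1 / real (Suc k)))"
            using False unfolding rho_def e_def by (simp add: powr_add[symmetric])
          then have "C * rho (Suc k) r = (C / A) * r powr (- e) * (A * r powr (-(1 / real (Suc k))))"
            using AB by (simp add: field_simps)
          also have "\<dots> < 1 * (A * r powr (-(1 / real (Suc k))))"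
            using elim rp AB by (intro mult_strict_right_mono) auto
          finally show ?case by simp
        qed
      qed
      show ?thesis using small eventually_ge_at_top[of 1]
      proof eventually_elim
        case (elim r)
        have "?N r \<le> \<bar>?N r - ?y\<bar>" using 3 by simp
        also have "\<dots> \<le> C * rho (Suc k) r" using C(2)[OF elim(2) i] .
        also have "\<dots> < A / ?s r"
        proof -
          have "A / ?s r = A * r powr (-(1 / real (Suc k)))" by (rule div_powr) (use elim in simp)
          then show ?thesis using elim(1) by linarith
        qed
        finally have "deriv (R (?s r)) (?N r) = 0" by (intro R_d0 s1) (use elim in auto)
        then show ?case using 3 by (simp add: sig'_def relu'_def)
      qed
    qed
  qed
  show ?thesis using ev by (rule tendsto_eventually)
qed

end

context setting begin

lemma dnet_lim:
  "((\<lambda>r. dnet l (sig r) (sig' r) \<theta> v k x i) \<longlongrightarrow> dnet l (\<lambda>m. relu) (\<lambda>m. relu') \<theta> v k x i) at_top"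
proof (induction k arbitrary: i)
  case 0 then show ?case by simp
next
  case (Suc k)
  have inp_lim: "((\<lambda>r. inp l (sig r) \<theta> k x j) \<longlongrightarrow> inp l (\<lambda>m. relu) \<theta> k x j) at_top" if j: "j \<in> {1..l k}" for j
  proof (cases k)
    case 0 then show ?thesis by (simp add: inp_def)
  next
    case (Suc k') then show ?thesis using sigN_lim[of j k' \<theta> x] j by (simp add: inp_def)
  qed
  have aff: "((\<lambda>r. affine l (Suc k) v (inp l (sig r) \<theta> k x) i) \<longlongrightarrow> affine l (Suc k) v (inp l (\<lambda>m. relu) \<theta> k x) i) at_top"
    unfolding affine_def diff_Suc_1 by (intro tendsto_add tendsto_const tendsto_sum tendsto_mult inp_lim) auto
  have sec: "((\<lambda>r. if k = 0 then 0 else (\<Sum>j=1..l k. wgt l (Suc k) \<theta> i j * (sig' r k (netw l (sig r) \<theta> k x j) * dnet l (sig r) (sig' r) \<theta> v k x j)))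
     \<longlongrightarrow> (if k = 0 then 0 else (\<Sum>j=1..l k. wgt l (Suc k) \<theta> i j * (relu' (netw l (\<lambda>m. relu) \<theta> k x j) * dnet l (\<lambda>m. relu) (\<lambda>m. relu') \<theta> v k x j)))) at_top"
  proof (cases k)
    case 0 then show ?thesis by simp
  next
    case (Suc k')
    have "((\<lambda>r. \<Sum>j=1..l k. wgt l (Suc k) \<theta> i j * (sig' r k (netw l (sig r) \<theta> k x j) * dnet l (sig r) (sig' r) \<theta> v k x j))
     \<longlongrightarrow> (\<Sum>j=1..l k. wgt l (Suc k) \<theta> i j * (relu' (netw l (\<lambda>m. relu) \<theta> k x j) * dnet l (\<lambda>m. relu) (\<lambda>m. relu') \<theta> v k x j))) at_top"
      unfolding Suc by (intro tendsto_sum tendsto_mult tendsto_const sig'N_lim Suc.IH[unfolded Suc]) auto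
    then show ?thesis using Suc by simp
  qed
  show ?case unfolding dnet_Suc by (rule tendsto_add[OF aff sec])
qed

lemma gint_lim:
  "((\<lambda>r. gint (sig r) (sig' r) \<theta> v x) \<longlongrightarrow> gint (\<lambda>m. relu) (\<lambda>m. relu') \<theta> v x) at_top"
proof -
  obtain L' where L': "L = Suc L'" using L_pos by (cases L) auto
  show ?thesis unfolding gint_def
    by (intro tendsto_sum tendsto_mult tendsto_const tendsto_diff dnet_lim, unfold L', rule N_lim) (auto simp: L')
qed

lemma grad_lim:
  "((\<lambda>r. grad (lossR l L R \<mu> f r) \<theta> q) \<longlongrightarrow> (\<integral>x. gint (\<lambda>m. relu) (\<lambda>m. relu') \<theta> (ev q) x \<partial>\<mu>)) at_top"
proof -
  define s where "s r = gint (sig (max 1 r)) (sig' (max 1 r)) \<theta> (ev q)" for r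
  have ev1: "\<forall>\<^sub>F r in at_top. (\<integral>x. s r x \<partial>\<mu>) = grad (lossR l L R \<mu> f r) \<theta> q"
    using eventually_ge_at_top[of 1] by eventually_elim (simp add: s_def grad_formula)
  have "((\<lambda>r. \<integral>x. s r x \<partial>\<mu>) \<longlongrightarrow> (\<integral>x. gint (\<lambda>m. relu) (\<lambda>m. relu') \<theta> (ev q) x \<partial>\<mu>)) at_top"
  proof (rule integral_dominated_convergence_at_top[where w="wbd (Mth \<theta>) cR 1"])
    show "gint (\<lambda>m. relu) (\<lambda>m. relu') \<theta> (ev q) \<in> borel_measurable \<mu>"
      by (rule gint_meas) (auto intro: relu_meas relu'_meas)
    show "s t \<in> borel_measurable \<mu>" for t
      unfolding s_def by (rule gint_meas[OF sig_meas sig'_meas]) auto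
    show "integrable \<mu> (wbd (Mth \<theta>) cR 1)" by (rule wbd_int)
    show "AE x in \<mu>. ((\<lambda>r. s r x) \<longlongrightarrow> gint (\<lambda>m. relu) (\<lambda>m. relu') \<theta> (ev q) x) at_top"
    proof (rule AE_I2)
      fix x
      have evx: "\<forall>\<^sub>F r in at_top. gint (sig r) (sig' r) \<theta> (ev q) x = s r x"
        using eventually_ge_at_top[of 1] by eventually_elim (simp add: s_def)
      show "((\<lambda>r. s r x) \<longlongrightarrow> gint (\<lambda>m. relu) (\<lambda>m. relu') \<theta> (ev q) x) at_top"
        by (rule tendsto_cong[OF evx, THEN iffD1, OF gint_lim])
    qed
    show "\<forall>\<^sub>F r in at_top. AE x in \<mu>. norm (s r x) \<le> wbd (Mth \<theta>) cR 1 x"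
    proof (rule always_eventually, intro allI AE_I2)
      fix r :: real and x assume x: "x \<in> space \<mu>"
      have r1: "1 \<le> max 1 r" by (rule max.cobounded1)
      show "norm (s r x) \<le> wbd (Mth \<theta>) cR 1 x"
        unfolding s_def real_norm_def
        by (rule gint_bound[OF x Mth_bound ev_bound sig_abs[OF r1] sig'_abs[OF r1] Mth_nonneg])
    qed
  qed
  then show ?thesis using tendsto_cong[OF ev1] by blast
qed

lemma G_formula:
  assumes G_def: "\<And>\<theta>. (\<forall>i\<in>{1..dsum l L}.
                     \<exists>v. ((\<lambda>r. grad (lossR l L R \<mu> f r) \<theta> i) \<longlongrightarrow> v) at_top) \<Longrightarrow>
                  (\<forall>i\<in>{1..dsum l L}.
                     ((\<lambda>r. grad (lossR l L R \<mu> f r) \<theta> i) \<longlongrightarrow> G \<theta> i) at_top)"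
    and q: "q \<in> {1..dsum l L}"
  shows "G \<theta> q = (\<integral>x. gint (\<lambda>m. relu) (\<lambda>m. relu') \<theta> (ev q) x \<partial>\<mu>)"
proof -
  have "\<forall>i\<in>{1..dsum l L}. ((\<lambda>r. grad (lossR l L R \<mu> f r) \<theta> i) \<longlongrightarrow> G \<theta> i) at_top"
    by (rule G_def) (use grad_lim in blast)
  then have "((\<lambda>r. grad (lossR l L R \<mu> f r) \<theta> q) \<longlongrightarrow> G \<theta> q) at_top" using q by blast
  from tendsto_unique[OF _ this grad_lim] show ?thesis by simp
qed

end

lemma ev_mult: "c * ev p q = (if q = p then c else 0)" by (simp add: ev_def)

lemma relu'_mul: "relu' y * y = relu y" by (simp add: relu'_def relu_def)

lemma sum_delta2:
  fixes c :: "nat \<Rightarrow> nat \<Rightarrow> real"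
  assumes "finite K" "\<And>k'. finite (I k')" "k \<in> K" "i \<in> I k"
  shows "(\<Sum>k'\<in>K. \<Sum>i'\<in>I k'. (if k' = k \<and> i' = i then c k' i' else 0)) = c k i"
proof -
  have "(\<Sum>i'\<in>I k'. (if k' = k \<and> i' = i then c k' i' else 0)) = (if k' = k then c k i else 0)" for k'
    using assms by (cases "k' = k") auto
  then show ?thesis using assms by simp
qed

lemma sum_delta3:
  fixes c :: "nat \<Rightarrow> nat \<Rightarrow> nat \<Rightarrow> real"
  assumes "finite K" "\<And>k'. finite (I k')" "\<And>k' i'. finite (J k' i')" "k \<in> K" "i \<in> I k" "j \<in> J k i"
  shows "(\<Sum>k'\<in>K. \<Sum>i'\<in>I k'. \<Sum>j'\<in>J k' i'. (if k' = k \<and> i' = i \<and> j' = j then c k' i' j' else 0)) = c k i j"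
proof -
  have "(\<Sum>i'\<in>I k'. \<Sum>j'\<in>J k' i'. (if k' = k \<and> i' = i \<and> j' = j then c k' i' j' else 0)) = (if k' = k then c k i j else 0)" for k'
  proof (cases "k' = k")
    case True
    have "(\<Sum>j'\<in>J k' i'. (if k' = k \<and> i' = i \<and> j' = j then c k' i' j' else 0)) = (if i' = i then c k i j else 0)" for i'
      using assms True by (cases "i' = i") auto
    then show ?thesis using assms True by simp
  qed simp
  then show ?thesis using assms by simp
qed

context setting begin

definition f0 where "f0 = f (\<lambda>i\<in>{1..l 0}. 0)"

definition vstar :: "(nat \<Rightarrow> real) \<Rightarrow> nat \<Rightarrow> real" where
  "vstar \<theta> = (\<lambda>q. (\<Sum>k=1..L. (\<Sum>i=1..l k. (2 * real k * bias l k \<theta> i) * ev (bidx l k i) q)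
       + (\<Sum>i=1..l k. \<Sum>j=1..l (k - 1). (2 * wgt l k \<theta> i j) * ev (widx l k i j) q))
     - (\<Sum>i=1..l L. (2 * real L * f0 i) * ev (bidx l L i) q))"

lemma vstar_bias:
  assumes k: "k \<in> {1..L}" and i: "i \<in> {1..l k}"
  shows "bias l k (vstar \<theta>) i = 2 * real k * bias l k \<theta> i - (if k = L then 2 * real L * f0 i else 0)"
proof -
  let ?p = "bidx l k i"
  have A: "(\<Sum>k'=1..L. \<Sum>i'=1..l k'. (2 * real k' * bias l k' \<theta> i') * ev (bidx l k' i') ?p)
      = (\<Sum>k'=1..L. \<Sum>i'=1..l k'. (if k' = k \<and> i' = i then 2 * real k' * bias l k' \<theta> i' else 0))"
    unfolding ev_mult using k i by (intro sum.cong refl) (auto simp: bidx_eq)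
  have B: "(\<Sum>i'=1..l k'. \<Sum>j'=1..l (k' - 1). (2 * wgt l k' \<theta> i' j') * ev (widx l k' i' j') ?p) = 0"
    if "k' \<in> {1..L}" for k'
    unfolding ev_mult using k i that by (intro sum.neutral ballI) (auto simp: bidx_widx)
  have C: "(\<Sum>i'=1..l L. (2 * real L * f0 i') * ev (bidx l L i') ?p) = (if k = L then 2 * real L * f0 i else 0)"
  proof -
    have "(\<Sum>i'=1..l L. (2 * real L * f0 i') * ev (bidx l L i') ?p) = (\<Sum>i'=1..l L. (if k = L \<and> i' = i then 2 * real L * f0 i' else 0))"
      unfolding ev_mult using k i L_pos by (intro sum.cong refl) (auto simp: bidx_eq)
    then show ?thesis using i by (cases "k = L") auto
  qed
  have "bias l k (vstar \<theta>) i = (\<Sum>k'=1..L. \<Sum>i'=1..l k'. (2 * real k' * bias l k' \<theta> i') * ev (bidx l k' i') ?p)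
      + (\<Sum>k'=1..L. \<Sum>i'=1..l k'. \<Sum>j'=1..l (k' - 1). (2 * wgt l k' \<theta> i' j') * ev (widx l k' i' j') ?p)
      - (\<Sum>i'=1..l L. (2 * real L * f0 i') * ev (bidx l L i') ?p)"
    unfolding bias_idx vstar_def by (simp add: sum.distrib)
  also have "\<dots> = 2 * real k * bias l k \<theta> i - (if k = L then 2 * real L * f0 i else 0)"
    unfolding A C using B k i by (simp add: sum_delta2)
  finally show ?thesis .
qed

lemma vstar_wgt:
  assumes k: "k \<in> {1..L}" and i: "i \<in> {1..l k}" and j: "j \<in> {1..l (k - 1)}"
  shows "wgt l k (vstar \<theta>) i j = 2 * wgt l k \<theta> i j"
proof -
  let ?p = "widx l k i j"
  have A: "(\<Sum>i'=1..l k'. (2 * real k' * bias l k' \<theta> i') * ev (bidx l k' i') ?p) = 0" if "k' \<in> {1..L}" for k'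
    unfolding ev_mult using k i j that by (intro sum.neutral ballI) (auto simp: widx_bidx)
  have B: "(\<Sum>k'=1..L. \<Sum>i'=1..l k'. \<Sum>j'=1..l (k' - 1). (2 * wgt l k' \<theta> i' j') * ev (widx l k' i' j') ?p)
     = (\<Sum>k'=1..L. \<Sum>i'=1..l k'. \<Sum>j'=1..l (k' - 1). (if k' = k \<and> i' = i \<and> j' = j then 2 * wgt l k' \<theta> i' j' else 0))"
    unfolding ev_mult using k i j by (intro sum.cong refl) (auto simp: widx_eq)
  have C: "(\<Sum>i'=1..l L. (2 * real L * f0 i') * ev (bidx l L i') ?p) = 0"
    unfolding ev_mult using k i j L_pos by (intro sum.neutral ballI) (auto simp: widx_bidx)
  have "wgt l k (vstar \<theta>) i j = (\<Sum>k'=1..L. \<Sum>i'=1..l k'. (2 * real k' * bias l k' \<theta> i') * ev (bidx l k' i') ?p)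
      + (\<Sum>k'=1..L. \<Sum>i'=1..l k'. \<Sum>j'=1..l (k' - 1). (2 * wgt l k' \<theta> i' j') * ev (widx l k' i' j') ?p)
      - (\<Sum>i'=1..l L. (2 * real L * f0 i') * ev (bidx l L i') ?p)"
    unfolding wgt_idx vstar_def by (simp add: sum.distrib)
  also have "\<dots> = 2 * wgt l k \<theta> i j"
    unfolding B C using A k i j by (simp add: sum_delta3)
  finally show ?thesis .
qed

lemma euler:
  "k \<in> {1..L} \<Longrightarrow> i \<in> {1..l k} \<Longrightarrow>
   dnet l (\<lambda>m. relu) (\<lambda>m. relu') \<theta> (vstar \<theta>) k x i =
     2 * real k * netw l (\<lambda>m. relu) \<theta> k x i - (if k = L then 2 * real L * f0 i else 0)"
proof (induction k arbitrary: i)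
  case 0 then show ?case by simp
next
  case (Suc k)
  show ?case
  proof (cases "k = 0")
    case True
    have "dnet l (\<lambda>m. relu) (\<lambda>m. relu') \<theta> (vstar \<theta>) (Suc k) x i
       = bias l 1 (vstar \<theta>) i + (\<Sum>j=1..l 0. wgt l 1 (vstar \<theta>) i j * x j)"
      using True by (simp add: affine_def)
    also have "\<dots> = 2 * bias l 1 \<theta> i - (if 1 = L then 2 * real L * f0 i else 0) + (\<Sum>j=1..l 0. 2 * wgt l 1 \<theta> i j * x j)"
      using Suc.prems True L_pos by (simp add: vstar_bias vstar_wgt)
    also have "\<dots> = 2 * real (Suc k) * netw l (\<lambda>m. relu) \<theta> (Suc k) x i - (if Suc k = L then 2 * real L * f0 i else 0)"
      using True by (simp add: affine_def sum_distrib_left algebra_simps)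
    finally show ?thesis .
  next
    case False
    have kL: "k < L" using Suc.prems by auto
    have IH: "dnet l (\<lambda>m. relu) (\<lambda>m. relu') \<theta> (vstar \<theta>) k x j = 2 * real k * netw l (\<lambda>m. relu) \<theta> k x j"
      if j: "j \<in> {1..l k}" for j
      using Suc.IH[OF _ j] False kL by simp
    let ?N = "\<lambda>j. netw l (\<lambda>m. relu) \<theta> k x j"
    have "dnet l (\<lambda>m. relu) (\<lambda>m. relu') \<theta> (vstar \<theta>) (Suc k) x i
       = bias l (Suc k) (vstar \<theta>) i + (\<Sum>j=1..l k. wgt l (Suc k) (vstar \<theta>) i j * relu (?N j))
         + (\<Sum>j=1..l k. wgt l (Suc k) \<theta> i j * (relu' (?N j) * dnet l (\<lambda>m. relu) (\<lambda>m. relu') \<theta> (vstar \<theta>) k x j))"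
      unfolding dnet_Suc using False by (simp add: affine_def inp_def)
    also have "\<dots> = (2 * real (Suc k) * bias l (Suc k) \<theta> i - (if Suc k = L then 2 * real L * f0 i else 0))
         + (\<Sum>j=1..l k. 2 * wgt l (Suc k) \<theta> i j * relu (?N j))
         + (\<Sum>j=1..l k. wgt l (Suc k) \<theta> i j * (2 * real k * relu (?N j)))"
    proof -
      have "(\<Sum>j=1..l k. wgt l (Suc k) (vstar \<theta>) i j * relu (?N j)) = (\<Sum>j=1..l k. 2 * wgt l (Suc k) \<theta> i j * relu (?N j))"
        using Suc.prems by (intro sum.cong refl) (simp add: vstar_wgt)
      moreover have "(\<Sum>j=1..l k. wgt l (Suc k) \<theta> i j * (relu' (?N j) * dnet l (\<lambda>m. relu) (\<lambda>m. relu') \<theta> (vstar \<theta>) k x j))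
          = (\<Sum>j=1..l k. wgt l (Suc k) \<theta> i j * (2 * real k * relu (?N j)))"
      proof (intro sum.cong refl)
        fix j assume j: "j \<in> {1..l k}"
        have "relu' (?N j) * (2 * real k * ?N j) = 2 * real k * (relu' (?N j) * ?N j)" by simp
        then show "wgt l (Suc k) \<theta> i j * (relu' (?N j) * dnet l (\<lambda>m. relu) (\<lambda>m. relu') \<theta> (vstar \<theta>) k x j)
            = wgt l (Suc k) \<theta> i j * (2 * real k * relu (?N j))"
          unfolding IH[OF j] relu'_mul by simp
      qed
      ultimately show ?thesis using Suc.prems by (simp add: vstar_bias)
    qed
    also have "\<dots> = 2 * real (Suc k) * netw l (\<lambda>m. relu) \<theta> (Suc k) x i - (if Suc k = L then 2 * real L * f0 i else 0)"
      using False by (simp add: netw_Suc affine_def inp_def sum_distrib_left sum.distrib[symmetric] algebra_simps)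
    finally show ?thesis .
  qed
qed

end

context setting begin

lemma gint_add: "gint \<sigma> \<sigma>' \<theta> (\<lambda>q. v q + w q) x = gint \<sigma> \<sigma>' \<theta> v x + gint \<sigma> \<sigma>' \<theta> w x"
  unfolding gint_def dnet_add sum.distrib[symmetric] by (intro sum.cong refl) (simp add: algebra_simps)
lemma gint_diff: "gint \<sigma> \<sigma>' \<theta> (\<lambda>q. v q - w q) x = gint \<sigma> \<sigma>' \<theta> v x - gint \<sigma> \<sigma>' \<theta> w x"
  unfolding gint_def dnet_diff sum_subtractf[symmetric] by (intro sum.cong refl) (simp add: algebra_simps)
lemma gint_smult: "gint \<sigma> \<sigma>' \<theta> (\<lambda>q. c * v q) x = c * gint \<sigma> \<sigma>' \<theta> v x"
  unfolding gint_def dnet_smult sum_distrib_left by (intro sum.cong refl) (simp add: algebra_simps)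
lemma gint_sum:
  assumes S: "finite S"
  shows "gint \<sigma> \<sigma>' \<theta> (\<lambda>q. \<Sum>s\<in>S. F s q) x = (\<Sum>s\<in>S. gint \<sigma> \<sigma>' \<theta> (F s) x)"
proof -
  have "gint \<sigma> \<sigma>' \<theta> (\<lambda>q. \<Sum>s\<in>S. F s q) x
      = (\<Sum>m=1..l L. \<Sum>s\<in>S. 2 * (netw l \<sigma> \<theta> L x m - f x m) * dnet l \<sigma> \<sigma>' \<theta> (F s) L x m)"
    unfolding gint_def dnet_sum[OF S] by (simp add: sum_distrib_left)
  also have "\<dots> = (\<Sum>s\<in>S. gint \<sigma> \<sigma>' \<theta> (F s) x)"
    unfolding gint_def by (rule sum.swap)
  finally show ?thesis .
qed

lemma gint_vstar:
  "gint (\<lambda>m. relu) (\<lambda>m. relu') \<theta> (vstar \<theta>) x =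
     4 * real L * (\<Sum>i=1..l L. (netw l (\<lambda>m. relu) \<theta> L x i - f x i) * (netw l (\<lambda>m. relu) \<theta> L x i - f0 i))"
proof -
  have "gint (\<lambda>m. relu) (\<lambda>m. relu') \<theta> (vstar \<theta>) x =
     (\<Sum>i=1..l L. 4 * real L * ((netw l (\<lambda>m. relu) \<theta> L x i - f x i) * (netw l (\<lambda>m. relu) \<theta> L x i - f0 i)))"
    unfolding gint_def using L_pos by (intro sum.cong refl) (simp add: euler algebra_simps)
  then show ?thesis by (simp add: sum_distrib_left)
qed

lemma gint_vstar_expand:
  "gint (\<lambda>m. relu) (\<lambda>m. relu') \<theta> (vstar \<theta>) x =
    (\<Sum>k=1..L. (\<Sum>i=1..l k. (2 * real k * bias l k \<theta> i) * gint (\<lambda>m. relu) (\<lambda>m. relu') \<theta> (ev (bidx l k i)) x)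
       + (\<Sum>i=1..l k. \<Sum>j=1..l (k - 1). (2 * wgt l k \<theta> i j) * gint (\<lambda>m. relu) (\<lambda>m. relu') \<theta> (ev (widx l k i j)) x))
     - (\<Sum>i=1..l L. (2 * real L * f0 i) * gint (\<lambda>m. relu) (\<lambda>m. relu') \<theta> (ev (bidx l L i)) x)"
  unfolding vstar_def by (simp add: gint_diff gint_sum gint_add gint_smult)

lemma int_ev: "integrable \<mu> (gint (\<lambda>m. relu) (\<lambda>m. relu') \<theta> (ev p))"
  by (rule gint_int[OF Mth_bound ev_bound relu_abs relu'_abs Mth_nonneg relu_meas relu'_meas])

lemma LHS_eq:
  assumes G_def: "\<And>\<theta>. (\<forall>i\<in>{1..dsum l L}.
                     \<exists>v. ((\<lambda>r. grad (lossR l L R \<mu> f r) \<theta> i) \<longlongrightarrow> v) at_top) \<Longrightarrow>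
                  (\<forall>i\<in>{1..dsum l L}.
                     ((\<lambda>r. grad (lossR l L R \<mu> f r) \<theta> i) \<longlongrightarrow> G \<theta> i) at_top)"
  shows "(\<Sum>k=1..L. real k * (\<Sum>i=1..l k. 2 * bias l k \<theta> i * G \<theta> (bidx l k i))
       + (\<Sum>i=1..l k. \<Sum>j=1..l (k - 1). 2 * wgt l k \<theta> i j * G \<theta> (widx l k i j)))
     - 2 * real L * (\<Sum>i=1..l L. f0 i * G \<theta> (bidx l L i))
   = 4 * real L * (\<integral>x. (\<Sum>i=1..l L. (netw l (\<lambda>m. relu) \<theta> L x i - f x i) * (netw l (\<lambda>m. relu) \<theta> L x i - f0 i)) \<partial>\<mu>)"
proof -
  define gI where "gI p = (\<integral>x. gint (\<lambda>m. relu) (\<lambda>m. relu') \<theta> (ev p) x \<partial>\<mu>)" for p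
  have G_eq: "G \<theta> p = gI p" if "p \<in> {1..dsum l L}" for p
    unfolding gI_def by (rule G_formula[OF G_def that])
  have Gb: "G \<theta> (bidx l k i) = gI (bidx l k i)" if "k \<in> {1..L}" "i \<in> {1..l k}" for k i
    using that by (intro G_eq bidx_in) auto
  have Gw: "G \<theta> (widx l k i j) = gI (widx l k i j)" if "k \<in> {1..L}" "i \<in> {1..l k}" "j \<in> {1..l (k - 1)}" for k i j
    using that by (intro G_eq widx_in) auto
  have "(\<Sum>k=1..L. real k * (\<Sum>i=1..l k. 2 * bias l k \<theta> i * G \<theta> (bidx l k i))
       + (\<Sum>i=1..l k. \<Sum>j=1..l (k - 1). 2 * wgt l k \<theta> i j * G \<theta> (widx l k i j)))
     - 2 * real L * (\<Sum>i=1..l L. f0 i * G \<theta> (bidx l L i))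
    = (\<Sum>k=1..L. (\<Sum>i=1..l k. (2 * real k * bias l k \<theta> i) * gI (bidx l k i))
       + (\<Sum>i=1..l k. \<Sum>j=1..l (k - 1). (2 * wgt l k \<theta> i j) * gI (widx l k i j)))
     - (\<Sum>i=1..l L. (2 * real L * f0 i) * gI (bidx l L i))"
  proof -
    have 1: "real k * (\<Sum>i=1..l k. 2 * bias l k \<theta> i * G \<theta> (bidx l k i)) = (\<Sum>i=1..l k. (2 * real k * bias l k \<theta> i) * gI (bidx l k i))"
      if k: "k \<in> {1..L}" for k
      unfolding sum_distrib_left using k by (intro sum.cong refl) (simp add: Gb)
    have 2: "(\<Sum>i=1..l k. \<Sum>j=1..l (k - 1). 2 * wgt l k \<theta> i j * G \<theta> (widx l k i j)) = (\<Sum>i=1..l k. \<Sum>j=1..l (k - 1). (2 * wgt l k \<theta> i j) * gI (widx l k i j))"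
      if k: "k \<in> {1..L}" for k
      using k by (intro sum.cong refl) (simp add: Gw)
    have 3: "2 * real L * (\<Sum>i=1..l L. f0 i * G \<theta> (bidx l L i)) = (\<Sum>i=1..l L. (2 * real L * f0 i) * gI (bidx l L i))"
      unfolding sum_distrib_left using L_pos by (intro sum.cong refl) (simp add: Gb)
    show ?thesis unfolding 3 using 1 2 by (intro arg_cong2[where f="(-)"] sum.cong refl) simp_all
  qed
  also have "\<dots> = (\<integral>x. gint (\<lambda>m. relu) (\<lambda>m. relu') \<theta> (vstar \<theta>) x \<partial>\<mu>)"
    unfolding gint_vstar_expand gI_def by (simp add: int_ev)
  also have "\<dots> = 4 * real L * (\<integral>x. (\<Sum>i=1..l L. (netw l (\<lambda>m. relu) \<theta> L x i - f x i) * (netw l (\<lambda>m. relu) \<theta> L x i - f0 i)) \<partial>\<mu>)"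
    unfolding gint_vstar by simp
  finally show ?thesis .
qed

end

lemma ode_sq:
  fixes g th :: "real \<Rightarrow> real" and t :: real
  assumes t: "0 \<le> t"
    and ode: "\<And>s. s \<in> {0..t} \<Longrightarrow> set_integrable lborel {0..s} g \<and> th s = th 0 - (LINT u:{0..s}|lborel. g u)"
  shows "set_integrable lborel {0..t} (\<lambda>s. th s * g s) \<and>
         (th t)\<^sup>2 = (th 0)\<^sup>2 - 2 * (LINT s:{0..t}|lborel. th s * g s)"
proof -
  define h where "h s = (LINT u:{0..s}|lborel. g u)" for s
  have gi: "set_integrable lborel {0..t} g" using ode[of t] t by auto
  have H: "set_integrable lborel {0..t} (\<lambda>s. h s * g s) \<and> (LINT s:{0..t}|lborel. h s * g s) = (h t)\<^sup>2 / 2"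
    unfolding h_def by (rule halfsq_integral[OF t gi])
  have eqf: "indicator {0..t} s * (th s * g s) = indicator {0..t} s * (th 0 * g s) - indicator {0..t} s * (h s * g s)" for s
  proof (cases "s \<in> {0..t}")
    case True
    then have e: "th s = th 0 - h s" using ode[OF True] by (simp add: h_def)
    show ?thesis unfolding e by (simp add: algebra_simps)
  qed simp
  have i1: "integrable lborel (\<lambda>s. indicator {0..t} s * (th 0 * g s))"
    using gi unfolding set_integrable_def by (simp add: mult.left_commute)
  have i2: "integrable lborel (\<lambda>s. indicator {0..t} s * (h s * g s))"
    using H unfolding set_integrable_def by simp
  have int: "set_integrable lborel {0..t} (\<lambda>s. th s * g s)"
    unfolding set_integrable_def using Bochner_Integration.integrable_diff[OF i1 i2] by (simp add: eqf)
  have "(LINT s:{0..t}|lborel. th s * g s) = (\<integral>s. indicator {0..t} s * (th 0 * g s) - indicator {0..t} s * (h s * g s) \<partial>lborel)"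
    unfolding set_lebesgue_integral_def by (simp add: eqf)
  also have "\<dots> = th 0 * h t - (h t)\<^sup>2 / 2"
    using H i1 i2 unfolding set_lebesgue_integral_def h_def
    by (simp add: Bochner_Integration.integral_diff mult.left_commute)
  finally have I: "(LINT s:{0..t}|lborel. th s * g s) = th 0 * h t - (h t)\<^sup>2 / 2" .
  have e: "th t = th 0 - h t" using ode[of t] t by (simp add: h_def)
  have "(th t)\<^sup>2 = (th 0)\<^sup>2 - 2 * (th 0 * h t - (h t)\<^sup>2 / 2)"
    unfolding e by (simp add: power2_eq_square algebra_simps)
  then show ?thesis using int unfolding I by simp
qed

lemma int_shape:
  fixes Fb :: "nat \<Rightarrow> nat \<Rightarrow> 'a \<Rightarrow> real" and Fw :: "nat \<Rightarrow> nat \<Rightarrow> nat \<Rightarrow> 'a \<Rightarrow> real" and Fk :: "nat \<Rightarrow> 'a \<Rightarrow> real"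
  assumes ib: "\<And>k i. k \<in> {1..L} \<Longrightarrow> i \<in> {1..l k} \<Longrightarrow> integrable M (Fb k i)"
    and iw: "\<And>k i j. k \<in> {1..L} \<Longrightarrow> i \<in> {1..l k} \<Longrightarrow> j \<in> {1..l (k - 1)} \<Longrightarrow> integrable M (Fw k i j)"
    and ik: "\<And>i. i \<in> {1..l L} \<Longrightarrow> integrable M (Fk i)"
  shows "(\<integral>s. (\<Sum>k=1..L. real k * (\<Sum>i=1..l k. 2 * Fb k i s) + (\<Sum>i=1..l k. \<Sum>j=1..l (k - 1). 2 * Fw k i j s))
            - 2 * real L * (\<Sum>i=1..l L. c i * Fk i s) \<partial>M)
       = (\<Sum>k=1..L. real k * (\<Sum>i=1..l k. 2 * (\<integral>s. Fb k i s \<partial>M)) + (\<Sum>i=1..l k. \<Sum>j=1..l (k - 1). 2 * (\<integral>s. Fw k i j s \<partial>M)))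
            - 2 * real L * (\<Sum>i=1..l L. c i * (\<integral>s. Fk i s \<partial>M))"
proof -
  have IB: "integrable M (\<lambda>s. \<Sum>i=1..l k. 2 * Fb k i s)" if "k \<in> {1..L}" for k
    by (intro Bochner_Integration.integrable_sum integrable_mult_right ib that)
  have IW: "integrable M (\<lambda>s. \<Sum>i=1..l k. \<Sum>j=1..l (k - 1). 2 * Fw k i j s)" if "k \<in> {1..L}" for k
    by (intro Bochner_Integration.integrable_sum integrable_mult_right iw that)
  have IK: "integrable M (\<lambda>s. \<Sum>i=1..l L. c i * Fk i s)"
    by (intro Bochner_Integration.integrable_sum integrable_mult_right ik)
  have IS: "integrable M (\<lambda>s. \<Sum>k=1..L. real k * (\<Sum>i=1..l k. 2 * Fb k i s) + (\<Sum>i=1..l k. \<Sum>j=1..l (k - 1). 2 * Fw k i j s))"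
    by (intro Bochner_Integration.integrable_sum Bochner_Integration.integrable_add integrable_mult_right IB IW)
  have e1: "(\<integral>s. (\<Sum>i=1..l k. 2 * Fb k i s) \<partial>M) = (\<Sum>i=1..l k. 2 * (\<integral>s. Fb k i s \<partial>M))" if "k \<in> {1..L}" for k
    by (subst Bochner_Integration.integral_sum) (auto intro: integrable_mult_right ib that)
  have e2: "(\<integral>s. (\<Sum>i=1..l k. \<Sum>j=1..l (k - 1). 2 * Fw k i j s) \<partial>M) = (\<Sum>i=1..l k. \<Sum>j=1..l (k - 1). 2 * (\<integral>s. Fw k i j s \<partial>M))" if "k \<in> {1..L}" for k
  proof -
    have "(\<integral>s. (\<Sum>i=1..l k. \<Sum>j=1..l (k - 1). 2 * Fw k i j s) \<partial>M) = (\<Sum>i=1..l k. (\<integral>s. (\<Sum>j=1..l (k - 1). 2 * Fw k i j s) \<partial>M))"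
      by (rule Bochner_Integration.integral_sum) (intro Bochner_Integration.integrable_sum integrable_mult_right iw that; simp)
    also have "\<dots> = (\<Sum>i=1..l k. \<Sum>j=1..l (k - 1). 2 * (\<integral>s. Fw k i j s \<partial>M))"
      by (intro sum.cong refl, subst Bochner_Integration.integral_sum) (auto intro: integrable_mult_right iw that)
    finally show ?thesis .
  qed
  have e3: "(\<integral>s. (\<Sum>i=1..l L. c i * Fk i s) \<partial>M) = (\<Sum>i=1..l L. c i * (\<integral>s. Fk i s \<partial>M))"
    by (subst Bochner_Integration.integral_sum) (auto intro: integrable_mult_right ik)
  have "(\<integral>s. (\<Sum>k=1..L. real k * (\<Sum>i=1..l k. 2 * Fb k i s) + (\<Sum>i=1..l k. \<Sum>j=1..l (k - 1). 2 * Fw k i j s))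
            - 2 * real L * (\<Sum>i=1..l L. c i * Fk i s) \<partial>M)
      = (\<integral>s. (\<Sum>k=1..L. real k * (\<Sum>i=1..l k. 2 * Fb k i s) + (\<Sum>i=1..l k. \<Sum>j=1..l (k - 1). 2 * Fw k i j s)) \<partial>M)
        - 2 * real L * (\<integral>s. (\<Sum>i=1..l L. c i * Fk i s) \<partial>M)"
    using IS IK by simp
  also have "(\<integral>s. (\<Sum>k=1..L. real k * (\<Sum>i=1..l k. 2 * Fb k i s) + (\<Sum>i=1..l k. \<Sum>j=1..l (k - 1). 2 * Fw k i j s)) \<partial>M)
      = (\<Sum>k=1..L. (\<integral>s. (real k * (\<Sum>i=1..l k. 2 * Fb k i s) + (\<Sum>i=1..l k. \<Sum>j=1..l (k - 1). 2 * Fw k i j s)) \<partial>M))"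
    by (rule Bochner_Integration.integral_sum) (intro Bochner_Integration.integrable_add integrable_mult_right IB IW; simp)
  also have "\<dots> = (\<Sum>k=1..L. real k * (\<Sum>i=1..l k. 2 * (\<integral>s. Fb k i s \<partial>M)) + (\<Sum>i=1..l k. \<Sum>j=1..l (k - 1). 2 * (\<integral>s. Fw k i j s \<partial>M)))"
  proof (intro sum.cong refl)
    fix k assume k: "k \<in> {1..L}"
    show "(\<integral>s. (real k * (\<Sum>i=1..l k. 2 * Fb k i s) + (\<Sum>i=1..l k. \<Sum>j=1..l (k - 1). 2 * Fw k i j s)) \<partial>M)
        = real k * (\<Sum>i=1..l k. 2 * (\<integral>s. Fb k i s \<partial>M)) + (\<Sum>i=1..l k. \<Sum>j=1..l (k - 1). 2 * (\<integral>s. Fw k i j s \<partial>M))"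
      using IB[OF k] IW[OF k] e1[OF k] e2[OF k] by simp
  qed
  finally show ?thesis unfolding e3 .
qed

lemma lin_comb_sum:
  fixes a b c d :: "nat \<Rightarrow> real"
  shows "(\<Sum>k\<in>K. real k * (a k - b k) + (c k - d k)) = (\<Sum>k\<in>K. real k * a k + c k) - (\<Sum>k\<in>K. real k * b k + d k)"
  unfolding sum_subtractf[symmetric] by (intro sum.cong refl) (simp add: algebra_simps)

theorem proposition3p4:
  fixes L :: nat and l :: "nat \<Rightarrow> nat" and a b A B T :: real
    and R :: "real \<Rightarrow> real \<Rightarrow> real"
    and \<mu> :: "(nat \<Rightarrow> real) measure"
    and f :: "(nat \<Rightarrow> real) \<Rightarrow> nat \<Rightarrow> real"
    and G :: "(nat \<Rightarrow> real) \<Rightarrow> nat \<Rightarrow> real"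
    and \<Theta> :: "real \<Rightarrow> nat \<Rightarrow> real"
  assumes L_pos: "L \<ge> 1"
    and l_pos: "\<And>k. l k \<ge> 1"
    and ab: "a < b"
    and AB: "0 < A" "A < B"
    and R_C1: "\<And>r. r \<ge> 1 \<Longrightarrow> \<exists>R'. continuous_on UNIV R' \<and>
                  (\<forall>x. (R r has_real_derivative R' x) (at x))"
    and R_low: "\<And>r x. r \<ge> 1 \<Longrightarrow> x \<le> A / r \<Longrightarrow> R r x = 0"
    and R_bnd: "\<And>r y. r \<ge> 1 \<Longrightarrow> 0 \<le> R r y \<and> R r y \<le> max y 0"
    and R_high: "\<And>r z. r \<ge> 1 \<Longrightarrow> z \<ge> B / r \<Longrightarrow> R r z = z"
    and R_deriv_bdd: "\<exists>c. \<forall>r\<ge>1. \<forall>x. \<bar>deriv (R r) x\<bar> \<le> c"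
    and mu_sets: "sets \<mu> = sets (PiM {1..l 0} (\<lambda>_. restrict_space lborel {a..b}))"
    and mu_fin: "finite_measure \<mu>"
    and f_meas: "\<And>i. i \<in> {1..l L} \<Longrightarrow> (\<lambda>x. f x i) \<in> borel_measurable \<mu>"
    and loss_int: "\<And>r \<theta>. r \<ge> 1 \<Longrightarrow> integrable \<mu> (sqerr l L (netR l R r \<theta> L) f)"
    and loss_int_inf: "\<And>\<theta>. integrable \<mu> (sqerr l L (netInf l \<theta> L) f)"
    and G_def: "\<And>\<theta>. (\<forall>i\<in>{1..dsum l L}.
                     \<exists>v. ((\<lambda>r. grad (lossR l L R \<mu> f r) \<theta> i) \<longlongrightarrow> v) at_top) \<Longrightarrow>
                  (\<forall>i\<in>{1..dsum l L}.
                     ((\<lambda>r. grad (lossR l L R \<mu> f r) \<theta> i) \<longlongrightarrow> G \<theta> i) at_top)"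
    and T_pos: "T > 0"
    and Theta_cont: "\<And>i. i \<in> {1..dsum l L} \<Longrightarrow> continuous_on {0..T} (\<lambda>s. \<Theta> s i)"
    and Theta_ode: "\<And>t i. t \<in> {0..T} \<Longrightarrow> i \<in> {1..dsum l L} \<Longrightarrow>
                  set_integrable lborel {0..t} (\<lambda>s. G (\<Theta> s) i) \<and>
                  \<Theta> t i = \<Theta> 0 i - (LINT s:{0..t}|lborel. G (\<Theta> s) i)"
  shows "\<forall>t\<in>{0..T}.
           Vfun l L (f (\<lambda>i\<in>{1..l 0}. 0)) (\<Theta> t) =
           Vfun l L (f (\<lambda>i\<in>{1..l 0}. 0)) (\<Theta> 0)
           - 4 * real L * (LINT s:{0..t}|lborel.
                (\<integral>x. (\<Sum>i=1..l L. (netInf l (\<Theta> s) L x i - f x i)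
                          * (netInf l (\<Theta> s) L x i - f (\<lambda>i\<in>{1..l 0}. 0) i)) \<partial>\<mu>))"
proof -
  interpret S: setting L l a b A B R \<mu> f
    by (rule setting.intro[OF L_pos l_pos ab AB(1) AB(2) R_C1 R_low R_bnd R_high R_deriv_bdd mu_sets mu_fin f_meas loss_int loss_int_inf])
  let ?f0 = "f (\<lambda>i\<in>{1..l 0}. 0)"
  have f0_eq: "S.f0 = ?f0" by (simp add: S.f0_def)
  show ?thesis
  proof
    fix t assume t: "t \<in> {0..T}"
    define J where "J p = (\<integral>s. indicator {0..t} s * (\<Theta> s p * G (\<Theta> s) p) \<partial>lborel)" for p
    define K where "K p = (\<integral>s. indicator {0..t} s * G (\<Theta> s) p \<partial>lborel)" for p
    have sqp: "integrable lborel (\<lambda>s. indicator {0..t} s * (\<Theta> s p * G (\<Theta> s) p)) \<and> (\<Theta> t p)\<^sup>2 = (\<Theta> 0 p)\<^sup>2 - 2 * J p"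
      if p: "p \<in> {1..dsum l L}" for p
    proof -
      have "set_integrable lborel {0..t} (\<lambda>s. \<Theta> s p * G (\<Theta> s) p) \<and>
         (\<Theta> t p)\<^sup>2 = (\<Theta> 0 p)\<^sup>2 - 2 * (LINT s:{0..t}|lborel. \<Theta> s p * G (\<Theta> s) p)"
      proof (rule ode_sq[where th="\<lambda>s. \<Theta> s p" and g="\<lambda>s. G (\<Theta> s) p"])
        show "0 \<le> t" using t by simp
        fix s assume "s \<in> {0..t}"
        then have "s \<in> {0..T}" using t by simp
        from Theta_ode[OF this p]
        show "set_integrable lborel {0..s} (\<lambda>s. G (\<Theta> s) p) \<and> \<Theta> s p = \<Theta> 0 p - (LINT u:{0..s}|lborel. G (\<Theta> u) p)" .
      qed
      then show ?thesis unfolding set_integrable_def set_lebesgue_integral_def J_def by simp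
    qed
    have lnp: "integrable lborel (\<lambda>s. indicator {0..t} s * G (\<Theta> s) p) \<and> \<Theta> t p = \<Theta> 0 p - K p"
      if p: "p \<in> {1..dsum l L}" for p
      using Theta_ode[OF t p] unfolding set_integrable_def set_lebesgue_integral_def K_def by simp
    have Ib: "integrable lborel (\<lambda>s. indicator {0..t} s * (\<Theta> s (bidx l k i) * G (\<Theta> s) (bidx l k i)))"
      if "k \<in> {1..L}" "i \<in> {1..l k}" for k i
    proof -
      have "bidx l k i \<in> {1..dsum l L}" using that by (intro bidx_in) auto
      from sqp[OF this] show ?thesis by blast
    qed
    have Iw: "integrable lborel (\<lambda>s. indicator {0..t} s * (\<Theta> s (widx l k i j) * G (\<Theta> s) (widx l k i j)))"
      if "k \<in> {1..L}" "i \<in> {1..l k}" "j \<in> {1..l (k - 1)}" for k i j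
    proof -
      have "widx l k i j \<in> {1..dsum l L}" using that by (intro widx_in) auto
      from sqp[OF this] show ?thesis by blast
    qed
    have Ik: "integrable lborel (\<lambda>s. indicator {0..t} s * G (\<Theta> s) (bidx l L i))"
      if "i \<in> {1..l L}" for i
    proof -
      have "bidx l L i \<in> {1..dsum l L}" using that L_pos by (intro bidx_in) auto
      from lnp[OF this] show ?thesis by blast
    qed
    define LHS where "LHS \<theta> = (\<Sum>k=1..L. real k * (\<Sum>i=1..l k. 2 * bias l k \<theta> i * G \<theta> (bidx l k i))
       + (\<Sum>i=1..l k. \<Sum>j=1..l (k - 1). 2 * wgt l k \<theta> i j * G \<theta> (widx l k i j)))
     - 2 * real L * (\<Sum>i=1..l L. S.f0 i * G \<theta> (bidx l L i))" for \<theta>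
    define RHS where "RHS = (\<Sum>k=1..L. real k * (\<Sum>i=1..l k. 2 * J (bidx l k i))
       + (\<Sum>i=1..l k. \<Sum>j=1..l (k - 1). 2 * J (widx l k i j)))
     - 2 * real L * (\<Sum>i=1..l L. S.f0 i * K (bidx l L i))"
    have V_eq: "Vfun l L S.f0 (\<Theta> t) = Vfun l L S.f0 (\<Theta> 0) - RHS"
    proof -
      have b2: "(\<Sum>i=1..l k. (bias l k (\<Theta> t) i)\<^sup>2) = (\<Sum>i=1..l k. (bias l k (\<Theta> 0) i)\<^sup>2) - (\<Sum>i=1..l k. 2 * J (bidx l k i))"
        if k: "k \<in> {1..L}" for k
        unfolding sum_subtractf[symmetric] bias_idx
      proof (intro sum.cong refl)
        fix i assume i: "i \<in> {1..l k}"
        have "bidx l k i \<in> {1..dsum l L}" using k i by (intro bidx_in) auto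
        from sqp[OF this] show "(\<Theta> t (bidx l k i))\<^sup>2 = (\<Theta> 0 (bidx l k i))\<^sup>2 - 2 * J (bidx l k i)" by blast
      qed
      have w2: "(\<Sum>i=1..l k. \<Sum>j=1..l (k - 1). (wgt l k (\<Theta> t) i j)\<^sup>2) = (\<Sum>i=1..l k. \<Sum>j=1..l (k - 1). (wgt l k (\<Theta> 0) i j)\<^sup>2) - (\<Sum>i=1..l k. \<Sum>j=1..l (k - 1). 2 * J (widx l k i j))"
        if k: "k \<in> {1..L}" for k
        unfolding sum_subtractf[symmetric] wgt_idx
      proof (intro sum.cong refl)
        fix i j assume i: "i \<in> {1..l k}" and j: "j \<in> {1..l (k - 1)}"
        have "widx l k i j \<in> {1..dsum l L}" using k i j by (intro widx_in) auto
        from sqp[OF this] show "(\<Theta> t (widx l k i j))\<^sup>2 = (\<Theta> 0 (widx l k i j))\<^sup>2 - 2 * J (widx l k i j)" by blast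
      qed
      have bl: "(\<Sum>i=1..l L. S.f0 i * bias l L (\<Theta> t) i) = (\<Sum>i=1..l L. S.f0 i * bias l L (\<Theta> 0) i) - (\<Sum>i=1..l L. S.f0 i * K (bidx l L i))"
        unfolding sum_subtractf[symmetric] bias_idx
      proof (intro sum.cong refl)
        fix i assume i: "i \<in> {1..l L}"
        have "bidx l L i \<in> {1..dsum l L}" using L_pos i by (intro bidx_in) auto
        from lnp[OF this] have e: "\<Theta> t (bidx l L i) = \<Theta> 0 (bidx l L i) - K (bidx l L i)" by blast
        show "S.f0 i * \<Theta> t (bidx l L i) = S.f0 i * \<Theta> 0 (bidx l L i) - S.f0 i * K (bidx l L i)"
          unfolding e by (simp add: algebra_simps)
      qed
      have "Vfun l L S.f0 (\<Theta> t) = (\<Sum>k=1..L. real k * ((\<Sum>i=1..l k. (bias l k (\<Theta> 0) i)\<^sup>2) - (\<Sum>i=1..l k. 2 * J (bidx l k i)))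
            + ((\<Sum>i=1..l k. \<Sum>j=1..l (k - 1). (wgt l k (\<Theta> 0) i j)\<^sup>2) - (\<Sum>i=1..l k. \<Sum>j=1..l (k - 1). 2 * J (widx l k i j))))
          - 2 * real L * ((\<Sum>i=1..l L. S.f0 i * bias l L (\<Theta> 0) i) - (\<Sum>i=1..l L. S.f0 i * K (bidx l L i)))"
        unfolding Vfun_def bl
        apply (intro arg_cong2[where f="(-)"] sum.cong refl)
        subgoal premises k for k using b2[OF k] w2[OF k] by (simp only:)
        done
      also have "\<dots> = Vfun l L S.f0 (\<Theta> 0) - RHS"
        unfolding lin_comb_sum unfolding Vfun_def RHS_def by (simp add: algebra_simps)
      finally show ?thesis .
    qed
    have LHS_int: "(\<integral>s. indicator {0..t} s * LHS (\<Theta> s) \<partial>lborel) = RHS"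
    proof -
      have "indicator {0..t} s * LHS (\<Theta> s) =
        (\<Sum>k=1..L. real k * (\<Sum>i=1..l k. 2 * (indicator {0..t} s * (\<Theta> s (bidx l k i) * G (\<Theta> s) (bidx l k i))))
          + (\<Sum>i=1..l k. \<Sum>j=1..l (k - 1). 2 * (indicator {0..t} s * (\<Theta> s (widx l k i j) * G (\<Theta> s) (widx l k i j)))))
        - 2 * real L * (\<Sum>i=1..l L. S.f0 i * (indicator {0..t} s * G (\<Theta> s) (bidx l L i)))" for s
        unfolding LHS_def bias_idx wgt_idx by (simp add: sum_distrib_left algebra_simps)
      then have "(\<integral>s. indicator {0..t} s * LHS (\<Theta> s) \<partial>lborel) =
        (\<integral>s. (\<Sum>k=1..L. real k * (\<Sum>i=1..l k. 2 * (indicator {0..t} s * (\<Theta> s (bidx l k i) * G (\<Theta> s) (bidx l k i))))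
          + (\<Sum>i=1..l k. \<Sum>j=1..l (k - 1). 2 * (indicator {0..t} s * (\<Theta> s (widx l k i j) * G (\<Theta> s) (widx l k i j)))))
        - 2 * real L * (\<Sum>i=1..l L. S.f0 i * (indicator {0..t} s * G (\<Theta> s) (bidx l L i))) \<partial>lborel)"
        by simp
      also have "\<dots> = RHS"
        unfolding RHS_def J_def K_def
        by (rule int_shape[where Fb="\<lambda>k i s. indicator {0..t} s * (\<Theta> s (bidx l k i) * G (\<Theta> s) (bidx l k i))"
              and Fw="\<lambda>k i j s. indicator {0..t} s * (\<Theta> s (widx l k i j) * G (\<Theta> s) (widx l k i j))"
              and Fk="\<lambda>i s. indicator {0..t} s * G (\<Theta> s) (bidx l L i)", OF Ib Iw Ik])
      finally show ?thesis .
    qed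
    have pt: "LHS (\<Theta> s) = 4 * real L * (\<integral>x. (\<Sum>i=1..l L. (netInf l (\<Theta> s) L x i - f x i)
                          * (netInf l (\<Theta> s) L x i - ?f0 i)) \<partial>\<mu>)" for s
      unfolding LHS_def netInf_def f0_eq[symmetric] by (rule S.LHS_eq[OF G_def])
    have "4 * real L * (LINT s:{0..t}|lborel. (\<integral>x. (\<Sum>i=1..l L. (netInf l (\<Theta> s) L x i - f x i)
                          * (netInf l (\<Theta> s) L x i - ?f0 i)) \<partial>\<mu>))
        = (\<integral>s. indicator {0..t} s * LHS (\<Theta> s) \<partial>lborel)"
      unfolding pt set_lebesgue_integral_def by (simp add: algebra_simps)
    then show "Vfun l L ?f0 (\<Theta> t) = Vfun l L ?f0 (\<Theta> 0) - 4 * real L * (LINT s:{0..t}|lborel. (\<integral>x. (\<Sum>i=1..l L. (netInf l (\<Theta> s) L x i - f x i)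
                          * (netInf l (\<Theta> s) L x i - ?f0 i)) \<partial>\<mu>))"
      using V_eq LHS_int unfolding f0_eq by simp
  qed
qed



end
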